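(* Let $p\ge 1$, $\alpha\ge 1$ and $f\in\mathcal{T}_p^{(\alpha)}(t^\alpha)$. Then $f$ (has a representative which) is continuous on $\mathbb{R}^+=(0,\infty)$, $\lim_{t\to\infty}f(t)=0$, and $$\sup_{t>0} t^{1/p}|f(t)|\le C_{\alpha,p}\|f\|_{\alpha,p},$$ where the constant $C_{\alpha,p}$ does not depend on $f$.
   Context: $\mathcal{S}_+$ denotes the Schwartz class on $[0,\infty)$. For $\alpha>0$ and $f\in\mathcal{S}_+$, the Weyl fractional integral is $W_+^{-\alpha}f(t)=\frac{1}{\Gamma(\alpha)}\int_t^\infty (s-t)^{\alpha-1}f(s)\,ds$ ($t>0$), and the Weyl fractional derivative is $W_+^{\alpha}f(t)=(-1)^n\frac{d^n}{dt^n}W_+^{-(n-\alpha)}f(t)$ with $n=[\alpha]+1$ (so $W_+^1f=-f'$). For $\alpha>0$ and $1\le p<\infty$, $\mathcal{T}_p^{(\alpha)}(t^\alpha)$ is the Banach space obtained as the completion of $\mathcal{S}_+$ in the norm $\|f\|_{\alpha,p}=\frac{1}{\Gamma(\alpha+1)}\left(\int_0^\infty |W_+^\alpha f(t)|^p t^{\alpha p}\,dt\right)^{1/p}$; it embeds continuously into $L^p(\mathbb{R}^+)$, so its elements are (a.e. defined) functions on $(0,\infty)$. *)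

theory Defs
  imports "HOL-Analysis.Analysis"
begin

text \<open>Schwartz class on [0,\<infinity>): smooth on [0,\<infinity>) (one-sided derivative at 0),
  with t^m f^(k)(t) bounded on [0,\<infinity>) for all m, k. Values on negative reals are irrelevant.\<close>
definition schwartz_plus :: "(real \<Rightarrow> complex) \<Rightarrow> bool" where
  "schwartz_plus f \<longleftrightarrow>
     (\<exists>D :: nat \<Rightarrow> real \<Rightarrow> complex.
        (\<forall>t\<ge>0. D 0 t = f t) \<and>
        (\<forall>k t. t \<ge> 0 \<longrightarrow> (D k has_vector_derivative D (Suc k) t) (at t within {0..})) \<and>
        (\<forall>k m. bounded ((\<lambda>t. (t ^ m) *\<^sub>R D k t) ` {0..})))"

definition weyl_int :: "real \<Rightarrow> (real \<Rightarrow> complex) \<Rightarrow> real \<Rightarrow> complex" where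
  "weyl_int \<alpha> f t = (1 / Gamma \<alpha>) *\<^sub>R (LINT s:{t..}|lborel. ((s - t) powr (\<alpha> - 1)) *\<^sub>R f s)"

definition nth_vderiv :: "nat \<Rightarrow> (real \<Rightarrow> complex) \<Rightarrow> real \<Rightarrow> complex" where
  "nth_vderiv n g = ((\<lambda>h t. vector_derivative h (at t)) ^^ n) g"

definition weyl_deriv :: "real \<Rightarrow> (real \<Rightarrow> complex) \<Rightarrow> real \<Rightarrow> complex" where
  "weyl_deriv \<alpha> f t =
     (let n = nat \<lfloor>\<alpha>\<rfloor> + 1 in
        ((-1) ^ n) *\<^sub>R nth_vderiv n (weyl_int (real n - \<alpha>) f) t)"

definition wnorm :: "real \<Rightarrow> real \<Rightarrow> (real \<Rightarrow> complex) \<Rightarrow> real" where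
  "wnorm \<alpha> p f = (1 / Gamma (\<alpha> + 1)) *
     (LINT t:{0<..}|lborel. norm (weyl_deriv \<alpha> f t) powr p * t powr (\<alpha> * p)) powr (1 / p)"

text \<open>\<phi> is a sequence in S_+, Cauchy for \<parallel>.\<parallel>_{\<alpha>,p}, converging in L^p(0,\<infinity>) to f:
  it represents the element f of the completion T_p^{(\<alpha>)}(t^\<alpha>) (viewed inside L^p).\<close>
definition T_rep :: "real \<Rightarrow> real \<Rightarrow> (nat \<Rightarrow> real \<Rightarrow> complex) \<Rightarrow> (real \<Rightarrow> complex) \<Rightarrow> bool" where
  "T_rep \<alpha> p \<phi> f \<longleftrightarrow>
     (\<forall>n. schwartz_plus (\<phi> n)) \<and>
     (\<forall>\<epsilon>>0. \<exists>N. \<forall>m\<ge>N. \<forall>n\<ge>N. wnorm \<alpha> p (\<lambda>t. \<phi> m t - \<phi> n t) < \<epsilon>) \<and>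
     set_borel_measurable lborel {0<..} f \<and>
     (\<lambda>n. \<integral>\<^sup>+ t\<in>{0<..}. ennreal (norm (\<phi> n t - f t) powr p) \<partial>lborel) \<longlonglongrightarrow> 0"

definition T_space :: "real \<Rightarrow> real \<Rightarrow> (real \<Rightarrow> complex) set" where
  "T_space \<alpha> p = {f. \<exists>\<phi>. T_rep \<alpha> p \<phi> f}"

definition T_norm_seq :: "real \<Rightarrow> real \<Rightarrow> (nat \<Rightarrow> real \<Rightarrow> complex) \<Rightarrow> real" where
  "T_norm_seq \<alpha> p \<phi> = lim (\<lambda>n. wnorm \<alpha> p (\<phi> n))"

end

theory Submission
  imports Defs "HOL-Analysis.Analysis"
begin


lemma set_int_inv_sq: "set_integrable lborel {0..} (\<lambda>s::real. 1 / (1+s)^2)"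
proof -
  have "((\<lambda>x::real. 1 / x ^ 2) has_integral 1 / (real (2 - 1) * 1 ^ (2 - 1))) {1..}"
    by (rule has_integral_inverse_power_to_inf) auto
  hence "(\<lambda>x::real. 1 / x ^ 2) absolutely_integrable_on {1..}"
    by (intro nonnegative_absolutely_integrable_1) (auto simp: integrable_on_def)
  hence "set_integrable lborel {1..} (\<lambda>x::real. 1 / x ^ 2)"
    by (simp add: absolutely_integrable_on_def set_integrable_def integrable_completion)
  hence "integrable lborel (\<lambda>x. indicator {1..} x *\<^sub>R (1 / x ^ 2 :: real))"
    by (simp add: set_integrable_def)
  from lborel_integrable_real_affine[OF this, of 1 1]
  have "integrable lborel (\<lambda>x. indicator {1..} (1 + 1 * x) *\<^sub>R (1 / (1 + 1 * x) ^ 2 :: real))" by simp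
  also have "(\<lambda>x. indicator {1..} (1 + 1 * x) *\<^sub>R (1 / (1 + 1 * x) ^ 2 :: real)) = (\<lambda>x. indicator {0..} x *\<^sub>R (1 / (1 + x) ^ 2))"
    by (auto simp: indicator_def fun_eq_iff)
  finally show ?thesis by (simp add: set_integrable_def)
qed


lemma set_int_powr_local:
  assumes "\<gamma> > 0"
  shows "set_integrable lborel {t..t+1} (\<lambda>s::real. (s - t) powr (\<gamma> - 1))"
proof -
  have "(\<lambda>x::real. x powr (\<gamma> - 1)) integrable_on {0..1}"
    by (rule integrable_on_powr_from_0) (use assms in auto)
  hence "(\<lambda>x::real. x powr (\<gamma> - 1)) absolutely_integrable_on {0..1}"
    by (intro nonnegative_absolutely_integrable_1) auto
  hence "integrable lborel (\<lambda>x. indicator {0..1} x *\<^sub>R (x powr (\<gamma> - 1) :: real))"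
    by (simp add: absolutely_integrable_on_def set_integrable_def integrable_completion)
  from lborel_integrable_real_affine[OF this, of 1 "-t"]
  have "integrable lborel (\<lambda>x. indicator {0..1} (-t + 1 * x) *\<^sub>R ((-t + 1 * x) powr (\<gamma> - 1) :: real))" by simp
  also have "(\<lambda>x. indicator {0..1} (-t + 1 * x) *\<^sub>R ((-t + 1 * x) powr (\<gamma> - 1) :: real)) = (\<lambda>x. indicator {t..t+1} x *\<^sub>R ((x - t) powr (\<gamma> - 1)))"
    by (auto simp: indicator_def fun_eq_iff)
  finally show ?thesis by (simp add: set_integrable_def)
qed

lemma kernel_bound:
  fixes s t \<gamma> :: real and N :: nat
  assumes "\<gamma> - 1 \<le> real N" "s \<ge> t" "t \<ge> 0" "s > t + 1"
  shows "(s - t) powr (\<gamma> - 1) \<le> (1 + s) ^ N"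
proof (cases "\<gamma> \<ge> 1")
  case True
  have "(s - t) powr (\<gamma> - 1) \<le> (1 + s) powr (\<gamma> - 1)"
    using assms True by (intro powr_mono2) auto
  also have "\<dots> \<le> (1 + s) powr (real N)"
    using assms by (intro powr_mono) auto
  also have "\<dots> = (1 + s) ^ N" using assms by (simp add: powr_realpow)
  finally show ?thesis .
next
  case False
  have "(s - t) powr (\<gamma> - 1) \<le> 1"
  proof -
    have "s - t \<ge> 1" "\<gamma> - 1 \<le> 0" using assms False by auto
    thus ?thesis by (metis powr_nonneg_iff powr_zero_eq_one powr_mono)
  qed
  also have "1 \<le> (1 + s) ^ N" using assms by (intro one_le_power) auto
  finally show ?thesis .
qed

lemma dec_M_nonneg: "\<forall>y\<ge>0. norm (g y) \<le> M / (1+y)^m \<Longrightarrow> M \<ge> (0::real)"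
proof -
  assume a: "\<forall>y\<ge>0. norm (g y) \<le> M / (1+y)^m"
  have "norm (g 0) \<le> M / (1+0)^m" using a by blast
  hence "norm (g 0) \<le> M" by simp
  thus ?thesis by (meson norm_ge_zero order_trans)
qed

lemma pow_ratio_bound:
  fixes s :: real and N m :: nat
  assumes "s \<ge> 0" "N + 2 \<le> m" "M \<ge> 0"
  shows "(1 + s) ^ N * (M / (1 + s) ^ m) \<le> M / (1 + s)^2"
proof -
  have e: "(1+s)^m = (1+s)^N * (1+s)^(m - N)"
    using assms by (simp flip: power_add)
  have pos: "(1+s)^N > 0" using assms by simp
  have "(1 + s) ^ N * (M / (1 + s) ^ m) = M / (1+s)^(m-N)"
    using assms by (smt (verit, ccfv_SIG) le_add_diff_inverse
    nonzero_mult_divide_mult_cancel_left power_add power_not_zero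
    times_divide_eq_right add_leD1)
  also have "\<dots> \<le> M / (1+s)^2"
    using assms by (intro divide_left_mono power_increasing mult_pos_pos) auto
  finally show ?thesis .
qed

lemma kernel_integrable:
  fixes g :: "real \<Rightarrow> complex"
  assumes \<gamma>: "\<gamma> > 0" and g: "g \<in> borel_measurable borel" and dec: "\<forall>y\<ge>0. norm (g y) \<le> M / (1+y)^m"
   and N: "\<gamma> - 1 \<le> real N" "N + 2 \<le> m" and t: "t \<ge> 0"
  shows "set_integrable lborel {t..} (\<lambda>s. (s - t) powr (\<gamma>-1) *\<^sub>R g s)"
proof -
  have M0: "M \<ge> 0" using dec by (rule dec_M_nonneg)
  let ?f = "\<lambda>s. M * (indicator {t..t+1} s *\<^sub>R (s-t) powr (\<gamma>-1)) + M * (indicator {0..} s *\<^sub>R (1/(1+s)^2))"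
  have i1: "integrable lborel (\<lambda>s. indicator {t..t+1} s *\<^sub>R (s-t) powr (\<gamma>-1))"
    using set_int_powr_local[OF \<gamma>, of t] by (simp add: set_integrable_def)
  have i2: "integrable lborel (\<lambda>s. indicator {0..} s *\<^sub>R (1/(1+s)^2::real))"
    using set_int_inv_sq by (simp add: set_integrable_def)
  have fi: "integrable lborel ?f"
    by (rule Bochner_Integration.integrable_add[OF integrable_mult_right[OF i1] integrable_mult_right[OF i2]])
  show ?thesis unfolding set_integrable_def
  proof (rule Bochner_Integration.integrable_bound[OF fi _ AE_I2])
    show "(\<lambda>x. indicator {t..} x *\<^sub>R ((x - t) powr (\<gamma> - 1) *\<^sub>R g x)) \<in> borel_measurable lborel"
      using g by measurable
  next
    fix s :: real
    show "norm (indicator {t..} s *\<^sub>R ((s - t) powr (\<gamma> - 1) *\<^sub>R g s)) \<le> norm (?f s)"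
    proof (cases "s \<ge> t")
      case False thus ?thesis by simp
    next
      case True
      have f0: "?f s \<ge> 0" using M0 by (auto simp: indicator_def)
      have gs: "norm (g s) \<le> M / (1+s)^m" using dec True t by auto
      have "norm (indicator {t..} s *\<^sub>R ((s - t) powr (\<gamma> - 1) *\<^sub>R g s)) = (s-t) powr (\<gamma>-1) * norm (g s)"
        using True by simp
      also have "\<dots> \<le> ?f s"
      proof (cases "s \<le> t + 1")
        case True
        have p1: "(1+s)^m \<ge> 1" using \<open>t \<le> s\<close> t by (intro one_le_power) auto
        have "M / (1+s)^m \<le> M / 1" using M0 p1 by (intro divide_left_mono) auto
        hence "M / (1+s)^m \<le> M" by simp
        hence "(s-t) powr (\<gamma>-1) * norm (g s) \<le> (s-t) powr (\<gamma>-1) * M"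
          using gs by (intro mult_left_mono) auto
        also have "\<dots> \<le> ?f s" using True \<open>t \<le> s\<close> t M0 by (auto simp: indicator_def)
        finally show ?thesis .
      next
        case False
        have "(s-t) powr (\<gamma>-1) * norm (g s) \<le> (1+s)^N * (M / (1+s)^m)"
          using kernel_bound[OF N(1) \<open>t \<le> s\<close> t] False gs t \<open>t \<le> s\<close> by (intro mult_mono) auto
        also have "\<dots> \<le> M / (1+s)^2" using pow_ratio_bound[OF _ N(2) M0, of s] t \<open>t \<le> s\<close> by auto
        also have "\<dots> \<le> ?f s" using False \<open>t \<le> s\<close> t M0 by (auto simp: indicator_def)
        finally show ?thesis .
      qed
      finally show ?thesis using f0 by simp
    qed
  qed
qed


lemma beta_shift:
  fixes \<gamma> \<delta> t u :: real
  assumes g: "\<gamma> > 0" and d: "\<delta> > 0" and tu: "t < u"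
  shows "set_integrable lborel {t..u} (\<lambda>s. (s-t) powr (\<gamma>-1) * (u-s) powr (\<delta>-1))"
    and "(LINT s:{t..u}|lborel. (s-t) powr (\<gamma>-1) * (u-s) powr (\<delta>-1)) = Beta \<gamma> \<delta> * (u-t) powr (\<gamma>+\<delta>-1)"
proof -
  define c where "c = u - t"
  have c: "c > 0" using tu by (simp add: c_def)
  define h where "h = (\<lambda>s. indicator {t..u} s * ((s-t) powr (\<gamma>-1) * (u-s) powr (\<delta>-1)))"
  have I0: "set_integrable lborel {0..1} (\<lambda>x. x powr (\<gamma> - 1) * (1 - x) powr (\<delta> - 1))"
    by (rule integrable_Beta[OF g d])
  have V0: "(LINT x:{0..1}|lborel. x powr (\<gamma> - 1) * (1 - x) powr (\<delta> - 1)) = Beta \<gamma> \<delta>"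
    using set_borel_integral_eq_integral(2)[OF I0] has_integral_Beta_real[OF g d]
    by (simp add: integral_unique)
  have hx: "h (t + c * x) = c powr (\<gamma>+\<delta>-2) * (indicator {0..1} x * (x powr (\<gamma> - 1) * (1 - x) powr (\<delta> - 1)))" for x
  proof (cases "x \<in> {0..1}")
    case True
    have "c * x \<le> c * 1" using True c by (intro mult_left_mono) auto
    moreover have "t + c = u" by (simp add: c_def)
    moreover have "0 \<le> c * x" using True c by auto
    ultimately have "t + c * x \<in> {t..u}" by auto
    moreover have "u - (t + c*x) = c * (1 - x)" by (simp add: c_def algebra_simps)
    ultimately have "h (t + c*x) = (c*x) powr (\<gamma>-1) * (c * (1-x)) powr (\<delta>-1)"
      by (simp add: h_def)
    also have "\<dots> = c powr (\<gamma>-1) * c powr (\<delta>-1) * (x powr (\<gamma> - 1) * (1 - x) powr (\<delta> - 1))"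
      using True c by (simp add: powr_mult)
    also have "c powr (\<gamma>-1) * c powr (\<delta>-1) = c powr (\<gamma>+\<delta>-2)"
      by (simp add: powr_add[symmetric])
    finally show ?thesis using True by simp
  next
    case False
    have "t + c * x \<notin> {t..u}"
    proof
      assume "t + c * x \<in> {t..u}"
      hence "0 \<le> c * x" "c * x \<le> c * 1" by (auto simp: c_def)
      hence "0 \<le> x" "x \<le> 1" using c by (auto simp: zero_le_mult_iff)
      thus False using False by auto
    qed
    thus ?thesis using False by (simp add: h_def)
  qed
  have hint: "integrable lborel (\<lambda>x. h (t + c * x))"
    unfolding hx using I0 by (intro integrable_mult_right) (simp add: set_integrable_def)
  hence "integrable lborel h"
    using lborel_integrable_real_affine_iff[of c h t] c by simp
  thus "set_integrable lborel {t..u} (\<lambda>s. (s-t) powr (\<gamma>-1) * (u-s) powr (\<delta>-1))"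
    by (simp add: set_integrable_def h_def)
  have "(LINT s:{t..u}|lborel. (s-t) powr (\<gamma>-1) * (u-s) powr (\<delta>-1)) = integral\<^sup>L lborel h"
    by (simp add: set_lebesgue_integral_def h_def)
  also have "\<dots> = \<bar>c\<bar> *\<^sub>R integral\<^sup>L lborel (\<lambda>x. h (t + c * x))"
    using lborel_integral_real_affine[of c h t] c by simp
  also have "\<dots> = c * (c powr (\<gamma>+\<delta>-2) * Beta \<gamma> \<delta>)"
    unfolding hx using c V0 by (simp add: set_lebesgue_integral_def)
  also have "\<dots> = Beta \<gamma> \<delta> * (u-t) powr (\<gamma>+\<delta>-1)"
  proof -
    have "c * c powr (\<gamma>+\<delta>-2) = c powr (\<gamma>+\<delta>-1)"
      using c by (simp add: powr_add[symmetric] powr_mult_base)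
    thus ?thesis by (simp add: c_def mult_ac)
  qed
  finally show "(LINT s:{t..u}|lborel. (s-t) powr (\<gamma>-1) * (u-s) powr (\<delta>-1)) = Beta \<gamma> \<delta> * (u-t) powr (\<gamma>+\<delta>-1)" .
qed

lemma semigroup:
  fixes G :: "real \<Rightarrow> complex" and \<gamma> \<delta> t M :: real and N m :: nat
  assumes g: "\<gamma> > 0" and d: "\<delta> > 0" and Gm[measurable]: "G \<in> borel_measurable borel"
    and dec: "\<forall>y\<ge>0. norm (G y) \<le> M / (1+y)^m"
    and N: "\<gamma> + \<delta> - 1 \<le> real N" "N + 2 \<le> m" and t: "t \<ge> 0"
  shows "set_integrable lborel {t..} (\<lambda>s. (s-t) powr (\<gamma>-1) *\<^sub>R (LINT u:{s..}|lborel. (u-s) powr (\<delta>-1) *\<^sub>R G u))"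
    and "(LINT s:{t..}|lborel. (s-t) powr (\<gamma>-1) *\<^sub>R (LINT u:{s..}|lborel. (u-s) powr (\<delta>-1) *\<^sub>R G u))
          = Beta \<gamma> \<delta> *\<^sub>R (LINT u:{t..}|lborel. (u-t) powr (\<gamma>+\<delta>-1) *\<^sub>R G u)"
proof -
  define F where "F = (\<lambda>u s. if t \<le> s \<and> s \<le> u then ((s-t) powr (\<gamma>-1) * (u-s) powr (\<delta>-1)) *\<^sub>R G u else 0)"
  have Fm: "(\<lambda>(u,s). F u s) \<in> borel_measurable (lborel \<Otimes>\<^sub>M lborel)"
    unfolding F_def by measurable
  have K: "set_integrable lborel {t..} (\<lambda>u. (u-t) powr (\<gamma>+\<delta>-1) *\<^sub>R G u)"
    using kernel_integrable[OF _ Gm dec _ N(2) t, of "\<gamma>+\<delta>"] N(1) g d by simp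
  have inner_all: "(LBINT s. F u s) = (indicator {t..} u * (Beta \<gamma> \<delta> * (u-t) powr (\<gamma>+\<delta>-1))) *\<^sub>R G u
     \<and> (LBINT s. norm (F u s)) = indicator {t..} u * (Beta \<gamma> \<delta> * (u-t) powr (\<gamma>+\<delta>-1)) * norm (G u)
     \<and> integrable lborel (F u)" for u
  proof (cases "t < u")
      case True
      have Fe: "F u = (\<lambda>s. (indicator {t..u} s * ((s-t) powr (\<gamma>-1) * (u-s) powr (\<delta>-1))) *\<^sub>R G u)"
        by (auto simp: F_def fun_eq_iff indicator_def)
      have Fn: "(\<lambda>s. norm (F u s)) = (\<lambda>s. (indicator {t..u} s * ((s-t) powr (\<gamma>-1) * (u-s) powr (\<delta>-1))) * norm (G u))"
        by (auto simp: F_def fun_eq_iff indicator_def)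
      have bi: "integrable lborel (\<lambda>s. indicator {t..u} s * ((s-t) powr (\<gamma>-1) * (u-s) powr (\<delta>-1)))"
        using beta_shift(1)[OF g d True] by (simp add: set_integrable_def)
      have bv: "(LBINT s. indicator {t..u} s * ((s-t) powr (\<gamma>-1) * (u-s) powr (\<delta>-1))) = Beta \<gamma> \<delta> * (u-t) powr (\<gamma>+\<delta>-1)"
        using beta_shift(2)[OF g d True] by (simp add: set_lebesgue_integral_def)
      show ?thesis using True
        unfolding Fe Fn using bi bv by (simp add: integrable_scaleR_left)
  next
      case False
      have "F u = (\<lambda>_. 0)"
        using False by (auto simp: F_def fun_eq_iff)
      moreover have "indicator {t..} u * (Beta \<gamma> \<delta> * (u-t) powr (\<gamma>+\<delta>-1)) = 0"
        using False by (cases "u = t") (auto simp: indicator_def)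
      ultimately show ?thesis by simp
  qed
  have inner: "(LBINT s. F u s) = (indicator {t..} u * (Beta \<gamma> \<delta> * (u-t) powr (\<gamma>+\<delta>-1))) *\<^sub>R G u"
    and inner_norm: "(LBINT s. norm (F u s)) = indicator {t..} u * (Beta \<gamma> \<delta> * (u-t) powr (\<gamma>+\<delta>-1)) * norm (G u)"
    and inner_int: "integrable lborel (F u)" for u
    using inner_all[of u] by auto
  have Fint: "integrable (lborel \<Otimes>\<^sub>M lborel) (\<lambda>(u,s). F u s)"
  proof (rule lborel_pair.Fubini_integrable)
    show "(\<lambda>(u,s). F u s) \<in> borel_measurable (lborel \<Otimes>\<^sub>M lborel)" by (rule Fm)
    have ia: "integrable lborel (\<lambda>u. Beta \<gamma> \<delta> * norm (indicator {t..} u *\<^sub>R ((u-t) powr (\<gamma>+\<delta>-1) *\<^sub>R G u)))"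
      using K by (intro integrable_mult_right integrable_norm) (simp add: set_integrable_def)
    have ib: "(\<lambda>u. Beta \<gamma> \<delta> * norm (indicator {t..} u *\<^sub>R ((u-t) powr (\<gamma>+\<delta>-1) *\<^sub>R G u))) = (\<lambda>u. LBINT s. norm (case (u, s) of (u, s) \<Rightarrow> F u s))"
      using t by (auto simp: inner_norm fun_eq_iff indicator_def abs_mult)
    show "integrable lborel (\<lambda>u. LBINT s. norm (case (u, s) of (u, s) \<Rightarrow> F u s))" using ia unfolding ib .
    show "AE u in lborel. integrable lborel (\<lambda>s. case (u, s) of (u, s) \<Rightarrow> F u s)"
      using inner_int by simp
  qed
  have L: "(\<lambda>s. LBINT u. F u s) = (\<lambda>s. indicator {t..} s *\<^sub>R ((s-t) powr (\<gamma>-1) *\<^sub>R (LINT u:{s..}|lborel. (u-s) powr (\<delta>-1) *\<^sub>R G u)))"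
  proof
    fix s
    have e: "(\<lambda>u. F u s) = (\<lambda>u. (indicator {t..} s * (s-t) powr (\<gamma>-1)) *\<^sub>R (indicator {s..} u *\<^sub>R ((u-s) powr (\<delta>-1) *\<^sub>R G u)))"
      by (auto simp: F_def fun_eq_iff indicator_def)
    have "(LBINT u. F u s) = (LBINT u. (indicator {t..} s * (s-t) powr (\<gamma>-1)) *\<^sub>R (indicator {s..} u *\<^sub>R ((u-s) powr (\<delta>-1) *\<^sub>R G u)))"
      by (simp only: e)
    also have "\<dots> = (indicator {t..} s * (s-t) powr (\<gamma>-1)) *\<^sub>R (LBINT u. indicator {s..} u *\<^sub>R ((u-s) powr (\<delta>-1) *\<^sub>R G u))"
      by (rule integral_scaleR_right)
    finally show "(LBINT u. F u s) = indicator {t..} s *\<^sub>R ((s-t) powr (\<gamma>-1) *\<^sub>R (LINT u:{s..}|lborel. (u-s) powr (\<delta>-1) *\<^sub>R G u))"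
      by (simp add: set_lebesgue_integral_def)
  qed
  show "set_integrable lborel {t..} (\<lambda>s. (s-t) powr (\<gamma>-1) *\<^sub>R (LINT u:{s..}|lborel. (u-s) powr (\<delta>-1) *\<^sub>R G u))"
    using lborel_pair.integrable_snd[OF Fint] unfolding L set_integrable_def .
  have "(LINT s:{t..}|lborel. (s-t) powr (\<gamma>-1) *\<^sub>R (LINT u:{s..}|lborel. (u-s) powr (\<delta>-1) *\<^sub>R G u))
        = (LBINT s. LBINT u. F u s)"
    unfolding L by (simp add: set_lebesgue_integral_def)
  also have "\<dots> = (LBINT u. LBINT s. F u s)"
    by (rule lborel_pair.Fubini_integral[OF Fint])
  also have "\<dots> = (LBINT u. (indicator {t..} u * (Beta \<gamma> \<delta> * (u-t) powr (\<gamma>+\<delta>-1))) *\<^sub>R G u)"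
    by (simp add: inner)
  also have "\<dots> = Beta \<gamma> \<delta> *\<^sub>R (LINT u:{t..}|lborel. (u-t) powr (\<gamma>+\<delta>-1) *\<^sub>R G u)"
    by (simp add: set_lebesgue_integral_def mult_ac flip: integral_scaleR_right)
  finally show "(LINT s:{t..}|lborel. (s-t) powr (\<gamma>-1) *\<^sub>R (LINT u:{s..}|lborel. (u-s) powr (\<delta>-1) *\<^sub>R G u))
          = Beta \<gamma> \<delta> *\<^sub>R (LINT u:{t..}|lborel. (u-t) powr (\<gamma>+\<delta>-1) *\<^sub>R G u)" .
qed


definition SW :: "(nat \<Rightarrow> real \<Rightarrow> complex) \<Rightarrow> bool" where
  "SW D \<longleftrightarrow> (\<forall>k t. t \<ge> 0 \<longrightarrow> (D k has_vector_derivative D (Suc k) t) (at t within {0..})) \<and>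
            (\<forall>k m. bounded ((\<lambda>t. (t ^ m) *\<^sub>R D k t) ` {0..}))"

definition Dz :: "(nat \<Rightarrow> real \<Rightarrow> complex) \<Rightarrow> nat \<Rightarrow> real \<Rightarrow> complex" where
  "Dz D k = (\<lambda>u. indicator {0..} u *\<^sub>R D k u)"

lemma pow_split_bound:
  fixes t :: real assumes "t \<ge> 0"
  shows "(1 + t) ^ m \<le> 2 ^ m * (1 + t ^ m)"
proof (cases "t \<le> 1")
  case True
  have "(1+t)^m \<le> 2^m" using assms True by (intro power_mono) auto
  also have "\<dots> \<le> 2^m * (1 + t^m)" using assms by simp
  finally show ?thesis .
next
  case False
  have "(1+t)^m \<le> (2*t)^m" using assms False by (intro power_mono) auto
  also have "\<dots> = 2^m * t^m" by (simp add: power_mult_distrib)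
  also have "\<dots> \<le> 2^m * (1 + t^m)" by simp
  finally show ?thesis .
qed

lemma SW_dec:
  assumes "SW D"
  shows "\<exists>M. \<forall>y\<ge>0. norm (D k y) \<le> M / (1+y)^m"
proof -
  from assms have b0: "bounded ((\<lambda>t. (t ^ 0) *\<^sub>R D k t) ` {0..})"
    and bm: "bounded ((\<lambda>t. (t ^ m) *\<^sub>R D k t) ` {0..})" unfolding SW_def by blast+
  obtain B0 where B0: "\<forall>t\<in>{0..}. norm ((t ^ 0) *\<^sub>R D k t) \<le> B0"
    using b0 unfolding bounded_iff by auto
  obtain Bm where Bm: "\<forall>t\<in>{0..}. norm ((t ^ m) *\<^sub>R D k t) \<le> Bm"
    using bm unfolding bounded_iff by auto
  show ?thesis
  proof (intro exI allI impI)
    fix y :: real assume y: "y \<ge> 0"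
    have a: "norm (D k y) \<le> B0" using B0 y by auto
    have b: "y^m * norm (D k y) \<le> Bm" using Bm y by auto
    have "(1+y)^m * norm (D k y) \<le> 2^m * (1 + y^m) * norm (D k y)"
      using pow_split_bound[OF y, of m] by (intro mult_right_mono) auto
    also have "\<dots> = 2^m * (norm (D k y) + y^m * norm (D k y))" by (simp add: algebra_simps)
    also have "\<dots> \<le> 2^m * (B0 + Bm)" using a b by (intro mult_left_mono) auto
    finally have "(1+y)^m * norm (D k y) \<le> 2^m * (B0 + Bm)" .
    moreover have "(1+y)^m > 0" using y by simp
    ultimately show "norm (D k y) \<le> 2^m * (B0 + Bm) / (1+y)^m"
      by (simp add: field_simps)
  qed
qed

lemma SW_cont: "SW D \<Longrightarrow> continuous_on {0..} (D k)"
  unfolding SW_def continuous_on_eq_continuous_within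
  by (auto intro: has_vector_derivative_continuous)

lemma Dz_meas[measurable]: "SW D \<Longrightarrow> Dz D k \<in> borel_measurable borel"
  unfolding Dz_def by (rule borel_measurable_continuous_on_indicator) (auto intro: SW_cont)

lemma Dz_eq: "t \<ge> 0 \<Longrightarrow> Dz D k t = D k t"
  by (simp add: Dz_def)

lemma Dz_dec:
  assumes "SW D"
  shows "\<exists>M. \<forall>y\<ge>0. norm (Dz D k y) \<le> M / (1+y)^m"
  using SW_dec[OF assms, of k m] by (simp add: Dz_eq)

lemma Dz_deriv:
  assumes "SW D" "t \<ge> 0"
  shows "(Dz D k has_vector_derivative Dz D (Suc k) t) (at t within {0..})"
proof -
  have "(D k has_vector_derivative D (Suc k) t) (at t within {0..})"
    using assms unfolding SW_def by blast
  hence "(Dz D k has_vector_derivative D (Suc k) t) (at t within {0..})"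
    by (rule has_vector_derivative_transform[rotated 2]) (use assms in \<open>auto simp: Dz_eq\<close>)
  thus ?thesis using assms by (simp add: Dz_eq)
qed

lemma Dz_lim:
  assumes "SW D"
  shows "(Dz D k \<longlongrightarrow> 0) at_top"
proof -
  obtain M where M: "\<forall>y\<ge>0. norm (Dz D k y) \<le> M / (1+y)^1"
    using Dz_dec[OF assms] by blast
  have "((\<lambda>y::real. M / (1+y)) \<longlongrightarrow> 0) at_top" by real_asymp
  thus ?thesis
    by (rule Lim_null_comparison[rotated]) (use M in \<open>auto intro!: eventually_at_top_linorderI[of 0]\<close>)
qed

lemma ftc_inf:
  fixes F f :: "real \<Rightarrow> complex"
  assumes der: "\<And>x. x \<ge> 0 \<Longrightarrow> (F has_vector_derivative f x) (at x within {0..})"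
    and int: "set_integrable lborel {t..} f" and lim: "(F \<longlongrightarrow> 0) at_top" and t: "t \<ge> 0"
  shows "(LINT x:{t..}|lborel. f x) = - F t"
proof -
  have L1: "((\<lambda>b. LINT x:{t..b}|lborel. f x) \<longlongrightarrow> (LINT x:{t..}|lborel. f x)) at_top"
    by (rule tendsto_set_lebesgue_integral_at_top[OF _ int]) auto
  have ev: "\<forall>\<^sub>F b in at_top. (LINT x:{t..b}|lborel. f x) = F b - F t"
  proof (intro eventually_at_top_linorderI[of t])
    fix b assume b: "b \<ge> t"
    have si: "set_integrable lborel {t..b} f"
      by (rule set_integrable_subset[OF int]) auto
    have "(f has_integral (F b - F t)) {t..b}"
      by (rule fundamental_theorem_of_calculus[OF b])
         (use t in \<open>auto intro: has_vector_derivative_within_subset[OF der]\<close>)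
    thus "(LINT x:{t..b}|lborel. f x) = F b - F t"
      using set_borel_integral_eq_integral(2)[OF si] by (simp add: integral_unique)
  qed
  have "((\<lambda>b. F b - F t) \<longlongrightarrow> 0 - F t) at_top"
    by (intro tendsto_diff lim tendsto_const)
  hence "((\<lambda>b. LINT x:{t..b}|lborel. f x) \<longlongrightarrow> 0 - F t) at_top"
    using tendsto_cong[OF ev] by simp
  from tendsto_unique[OF trivial_limit_at_top_linorder L1 this] show ?thesis by simp
qed


lemma Beta_k1: "Beta (real k + 1) 1 = 1 / (real k + 1)"
proof -
  have nz: "real k + 1 + 1 \<notin> \<int>\<^sub>\<le>\<^sub>0"
  proof
    assume "real k + 1 + 1 \<in> \<int>\<^sub>\<le>\<^sub>0"
    hence "real k + 1 + 1 \<le> 0" by (rule nonpos_Ints_nonpos)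
    thus False by simp
  qed
  have g: "Gamma (real k + 1) > 0" by (intro Gamma_real_pos) auto
  have "Gamma (real k + 1) * Gamma 1 = Beta (real k + 1) 1 * Gamma (real k + 1 + 1)"
    by (rule Gamma_Gamma_Beta[OF nz])
  also have "Gamma (real k + 1 + 1) = (real k + 1) * Gamma (real k + 1)"
    by (rule Gamma_plus1) (use nonpos_Ints_nonpos in force)
  finally have "Gamma (real k + 1) * ((real k + 1) * Beta (real k + 1) 1) = Gamma (real k + 1) * 1"
    by (simp add: algebra_simps)
  hence e: "(real k + 1) * Beta (real k + 1) 1 = 1" using g by (metis mult_left_cancel less_irrefl)
  have "real k + 1 > 0" by simp
  thus ?thesis using e by (simp add: field_simps)
qed

lemma dec_integrable:
  fixes g :: "real \<Rightarrow> complex"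
  assumes g[measurable]: "g \<in> borel_measurable borel" and dec: "\<forall>y\<ge>0. norm (g y) \<le> M / (1+y)^2" and t: "t \<ge> 0"
  shows "set_integrable lborel {t..} g"
proof -
  have M0: "M \<ge> 0" using dec by (rule dec_M_nonneg)
  have i2: "integrable lborel (\<lambda>s. M * (indicator {0..} s *\<^sub>R (1/(1+s)^2::real)))"
    using set_int_inv_sq by (intro integrable_mult_right) (simp add: set_integrable_def)
  show ?thesis unfolding set_integrable_def
  proof (rule Bochner_Integration.integrable_bound[OF i2 _ AE_I2])
    show "(\<lambda>x. indicator {t..} x *\<^sub>R g x) \<in> borel_measurable lborel" by measurable
  next
    fix s :: real
    show "norm (indicator {t..} s *\<^sub>R g s) \<le> norm (M * (indicator {0..} s *\<^sub>R (1/(1+s)^2::real)))"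
      using dec t M0 by (auto simp: indicator_def)
  qed
qed

lemma powr0_integral:
  fixes g :: "real \<Rightarrow> complex"
  assumes g[measurable]: "g \<in> borel_measurable borel"
  shows "(LINT u:{t..}|lborel. (u-t) powr 0 *\<^sub>R g u) = (LINT u:{t..}|lborel. g u)"
  unfolding set_lebesgue_integral_def
proof (rule integral_cong_AE)
  show "AE x in lborel. indicator {t..} x *\<^sub>R (x - t) powr 0 *\<^sub>R g x = indicator {t..} x *\<^sub>R g x"
    using AE_lborel_singleton[of t] by eventually_elim auto
qed measurable

context
  fixes D :: "nat \<Rightarrow> real \<Rightarrow> complex"
  assumes SWD: "SW D"
begin

lemma Dzm[measurable]: "Dz D k \<in> borel_measurable borel"
  by (rule Dz_meas[OF SWD])

lemma Dz_kernel_int: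
  assumes "\<gamma> > 0" "t \<ge> 0"
  shows "set_integrable lborel {t..} (\<lambda>s. (s-t) powr (\<gamma>-1) *\<^sub>R Dz D k s)"
proof -
  define N where "N = nat \<lceil>\<gamma>\<rceil>"
  have N: "\<gamma> - 1 \<le> real N" unfolding N_def by linarith
  obtain M where M: "\<forall>y\<ge>0. norm (Dz D k y) \<le> M / (1+y)^(N+2)"
    using Dz_dec[OF SWD] by blast
  show ?thesis by (rule kernel_integrable[OF assms(1) Dzm M N _ assms(2)]) simp
qed

lemma Dz_semigroup:
  assumes "\<gamma> > 0" "\<delta> > 0" "t \<ge> 0"
  shows "(LINT s:{t..}|lborel. (s-t) powr (\<gamma>-1) *\<^sub>R (LINT u:{s..}|lborel. (u-s) powr (\<delta>-1) *\<^sub>R Dz D k u))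
          = Beta \<gamma> \<delta> *\<^sub>R (LINT u:{t..}|lborel. (u-t) powr (\<gamma>+\<delta>-1) *\<^sub>R Dz D k u)"
proof -
  define N where "N = nat \<lceil>\<gamma>+\<delta>\<rceil>"
  have N: "\<gamma> + \<delta> - 1 \<le> real N" unfolding N_def by linarith
  obtain M where M: "\<forall>y\<ge>0. norm (Dz D k y) \<le> M / (1+y)^(N+2)"
    using Dz_dec[OF SWD] by blast
  show ?thesis by (rule semigroup(2)[OF assms(1,2) Dzm M N _ assms(3)]) simp
qed

lemma Dz_ftc:
  assumes "t \<ge> 0"
  shows "(LINT u:{t..}|lborel. Dz D (Suc j) u) = - Dz D j t"
proof (rule ftc_inf[OF _ _ Dz_lim[OF SWD] assms])
  show "(Dz D j has_vector_derivative Dz D (Suc j) x) (at x within {0..})" if "x \<ge> 0" for x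
    by (rule Dz_deriv[OF SWD that])
  obtain M where M: "\<forall>y\<ge>0. norm (Dz D (Suc j) y) \<le> M / (1+y)^2"
    using Dz_dec[OF SWD] by blast
  show "set_integrable lborel {t..} (Dz D (Suc j))"
    by (rule dec_integrable[OF Dzm M assms])
qed

lemma taylor:
  "t \<ge> 0 \<Longrightarrow> (LINT u:{t..}|lborel. (u-t) powr (real k) *\<^sub>R Dz D (j+k+1) u) = ((-1)^(k+1) * fact k) *\<^sub>R Dz D j t"
proof (induction k arbitrary: t)
  case 0
  show ?case using powr0_integral[OF Dzm, of t "Suc j"] Dz_ftc[OF 0, of j] by simp
next
  case (Suc k)
  have "(LINT u:{t..}|lborel. (u-t) powr (real (Suc k)) *\<^sub>R Dz D (j+Suc k+1) u)
      = (real k + 1) *\<^sub>R (Beta (real k + 1) 1 *\<^sub>R (LINT u:{t..}|lborel. (u-t) powr (real k + 1 + 1 - 1) *\<^sub>R Dz D (j+k+2) u))"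
  proof -
    have b: "(1 + real k) * Beta (1 + real k) 1 = 1" using Beta_k1[of k] by (simp add: add.commute)
    show ?thesis by (simp add: b add_ac)
  qed
  also have "(Beta (real k + 1) 1 *\<^sub>R (LINT u:{t..}|lborel. (u-t) powr (real k + 1 + 1 - 1) *\<^sub>R Dz D (j+k+2) u))
      = (LINT s:{t..}|lborel. (s-t) powr (real k + 1 - 1) *\<^sub>R (LINT u:{s..}|lborel. (u-s) powr (1-1) *\<^sub>R Dz D (j+k+2) u))"
    by (rule Dz_semigroup[symmetric]) (use Suc.prems in auto)
  also have "\<dots> = (LINT s:{t..}|lborel. (s-t) powr (real k) *\<^sub>R (- Dz D (j+k+1) s))"
  proof -
    have "(LINT u:{s..}|lborel. (u-s) powr (1-1) *\<^sub>R Dz D (j+k+2) u) = - Dz D (j+k+1) s" if "s \<ge> t" for s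
      using powr0_integral[OF Dzm, of s "j+k+2"] Dz_ftc[of s "j+k+1"] that Suc.prems by (simp add: add_ac)
    thus ?thesis unfolding set_lebesgue_integral_def
      by (intro Bochner_Integration.integral_cong) (auto simp: indicator_def)
  qed
  also have "\<dots> = - (LINT s:{t..}|lborel. (s-t) powr (real k) *\<^sub>R Dz D (j+k+1) s)"
    by (simp add: set_lebesgue_integral_def flip: integral_minus)
  also have "\<dots> = - (((-1)^(k+1) * fact k) *\<^sub>R Dz D j t)"
    using Suc.IH[OF Suc.prems] by simp
  finally show ?case by (simp add: algebra_simps)
qed

end


lemma vd_quot:
  fixes f :: "real \<Rightarrow> 'a::real_normed_vector"
  assumes "(f has_vector_derivative f') (at y)"
  shows "((\<lambda>z. (f z - f y) /\<^sub>R (z - y)) \<longlongrightarrow> f') (at y)"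
proof -
  have "((\<lambda>z. norm (f z - f y - (z - y) *\<^sub>R f') / norm (z - y)) \<longlongrightarrow> 0) (at y)"
    using assms unfolding has_vector_derivative_def has_derivative_iff_norm by auto
  moreover have "\<forall>\<^sub>F z in at y. norm (f z - f y - (z - y) *\<^sub>R f') / norm (z - y) = norm ((f z - f y) /\<^sub>R (z - y) - f')"
    unfolding eventually_at_filter
  proof (intro always_eventually allI impI)
    fix z assume z: "z \<noteq> y"
    have "(1 / (z - y)) *\<^sub>R (f z - f y - (z - y) *\<^sub>R f') = (1/(z-y)) *\<^sub>R (f z - f y) - ((1/(z-y)) * (z-y)) *\<^sub>R f'"
      by (simp add: scaleR_diff_right)
    hence "(f z - f y) /\<^sub>R (z - y) - f' = (1 / (z - y)) *\<^sub>R (f z - f y - (z - y) *\<^sub>R f')"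
      using z by (simp add: divide_inverse)
    thus "norm (f z - f y - (z - y) *\<^sub>R f') / norm (z - y) = norm ((f z - f y) /\<^sub>R (z - y) - f')"
      by (simp add: divide_simps)
  qed
  ultimately have "((\<lambda>z. norm ((f z - f y) /\<^sub>R (z - y) - f')) \<longlongrightarrow> 0) (at y)"
    using tendsto_cong by fastforce
  thus ?thesis by (simp add: tendsto_norm_zero_iff LIM_zero_iff)
qed

lemma quot_vd:
  fixes f :: "real \<Rightarrow> 'a::real_normed_vector"
  assumes "((\<lambda>h. (f (y + h) - f y) /\<^sub>R h) \<longlongrightarrow> f') (at 0)"
  shows "(f has_vector_derivative f') (at y)"
proof -
  have "((\<lambda>z. (f z - f y) /\<^sub>R (z - y)) \<longlongrightarrow> f') (at y)"
    using assms by (subst LIM_offset_zero_iff) auto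
  hence "((\<lambda>z. (f z - f y) /\<^sub>R (z - y) - f') \<longlongrightarrow> 0) (at y)"
    by (simp add: LIM_zero_iff)
  hence "((\<lambda>z. norm ((f z - f y) /\<^sub>R (z - y) - f')) \<longlongrightarrow> 0) (at y)"
    by (simp add: tendsto_norm_zero_iff)
  moreover have "\<forall>\<^sub>F z in at y. norm ((f z - f y) /\<^sub>R (z - y) - f') = norm (f z - f y - (z - y) *\<^sub>R f') / norm (z - y)"
    unfolding eventually_at_filter
  proof (intro always_eventually allI impI)
    fix z assume z: "z \<noteq> y"
    have "(1 / (z - y)) *\<^sub>R (f z - f y - (z - y) *\<^sub>R f') = (1/(z-y)) *\<^sub>R (f z - f y) - ((1/(z-y)) * (z-y)) *\<^sub>R f'"
      by (simp add: scaleR_diff_right)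
    hence "(f z - f y) /\<^sub>R (z - y) - f' = (1 / (z - y)) *\<^sub>R (f z - f y - (z - y) *\<^sub>R f')"
      using z by (simp add: divide_inverse)
    thus "norm ((f z - f y) /\<^sub>R (z - y) - f') = norm (f z - f y - (z - y) *\<^sub>R f') / norm (z - y)"
      by (simp add: divide_simps)
  qed
  ultimately have "((\<lambda>z. norm (f z - f y - (z - y) *\<^sub>R f') / norm (z - y)) \<longlongrightarrow> 0) (at y)"
    using tendsto_cong by fastforce
  thus ?thesis unfolding has_vector_derivative_def has_derivative_iff_norm
    by (auto intro: bounded_linear_scaleR_left)
qed

lemma ker_bound_u:
  fixes u \<beta> C :: real
  assumes "u \<ge> 0" "0 < \<beta>" "\<beta> \<le> 1" "C \<ge> 0"
  shows "u powr (\<beta>-1) * (C / (1+u)^2) \<le> C * (indicator {0..0+1} u * u powr (\<beta>-1) + indicator {0..} u * (1/(1+u)^2))"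
proof (cases "u \<le> 1")
  case True
  have "1 \<le> (1+u)^2" using assms by (intro one_le_power) auto
  hence "C / (1+u)^2 \<le> C / 1" using assms by (intro divide_left_mono) auto
  hence "C / (1+u)^2 \<le> C" by simp
  hence "u powr (\<beta>-1) * (C / (1+u)^2) \<le> u powr (\<beta>-1) * C" by (intro mult_left_mono) auto
  also have "\<dots> \<le> C * (indicator {0..0+1} u * u powr (\<beta>-1) + indicator {0..} u * (1/(1+u)^2))"
    using True assms by (simp add: indicator_def algebra_simps)
  finally show ?thesis .
next
  case False
  have "u powr (\<beta>-1) \<le> 1" using False assms
    by (metis powr_nonneg_iff powr_zero_eq_one powr_mono diff_le_0_iff_le less_eq_real_def not_le)
  hence "u powr (\<beta>-1) * (C / (1+u)^2) \<le> 1 * (C / (1+u)^2)" using assms by (intro mult_right_mono) auto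
  also have "\<dots> \<le> C * (indicator {0..0+1} u * u powr (\<beta>-1) + indicator {0..} u * (1/(1+u)^2))"
    using False assms by (simp add: indicator_def)
  finally show ?thesis .
qed

lemma ker_u_dom_int:
  fixes \<beta> C :: real
  assumes "0 < \<beta>"
  shows "integrable lborel (\<lambda>u. C * (indicator {0..0+1} u * u powr (\<beta>-1) + indicator {0..} u * (1/(1+u)^2)))"
proof -
  have i1: "integrable lborel (\<lambda>s. indicator {0..0+1} s *\<^sub>R (s-0) powr (\<beta>-1))"
    using set_int_powr_local[OF assms, of 0] by (simp add: set_integrable_def)
  have i2: "integrable lborel (\<lambda>s. indicator {0..} s *\<^sub>R (1/(1+s)^2::real))"
    using set_int_inv_sq by (simp add: set_integrable_def)
  show ?thesis using Bochner_Integration.integrable_add[OF i1 i2]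
    by (intro integrable_mult_right) simp
qed

definition KU :: "real \<Rightarrow> (real \<Rightarrow> complex) \<Rightarrow> real \<Rightarrow> complex" where
  "KU \<beta> g x = (LBINT u. indicator {0..} u *\<^sub>R (u powr (\<beta>-1) *\<^sub>R g (x+u)))"

lemma KI_KU: "(LINT s:{x..}|lborel. (s-x) powr (\<beta>-1) *\<^sub>R g s) = KU \<beta> g x"
proof -
  have "(LINT s:{x..}|lborel. (s-x) powr (\<beta>-1) *\<^sub>R g s) = (LBINT s. indicator {x..} s *\<^sub>R ((s-x) powr (\<beta>-1) *\<^sub>R g s))"
    by (simp add: set_lebesgue_integral_def)
  also have "\<dots> = \<bar>1\<bar> *\<^sub>R (LBINT u. indicator {x..} (x + 1*u) *\<^sub>R (((x + 1*u)-x) powr (\<beta>-1) *\<^sub>R g (x + 1*u)))"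
    by (rule lborel_integral_real_affine[where c=1 and t=x]) simp
  also have "(\<lambda>u. indicator {x..} (x + 1*u) *\<^sub>R (((x + 1*u)-x) powr (\<beta>-1) *\<^sub>R g (x + 1*u))) = (\<lambda>u. indicator {0..} u *\<^sub>R (u powr (\<beta>-1) *\<^sub>R g (x+u)))"
    by (auto simp: indicator_def fun_eq_iff)
  also have "\<bar>1::real\<bar> *\<^sub>R (LBINT u. indicator {0..} u *\<^sub>R (u powr (\<beta>-1) *\<^sub>R g (x+u))) = KU \<beta> g x"
    by (simp add: KU_def)
  finally show ?thesis .
qed

lemma ker_u_int:
  fixes g :: "real \<Rightarrow> complex"
  assumes b: "0 < \<beta>" "\<beta> \<le> 1" and g[measurable]: "g \<in> borel_measurable borel"
    and dec: "\<forall>y\<ge>0. norm (g y) \<le> M / (1+y)^2" and x: "x \<ge> 0"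
  shows "integrable lborel (\<lambda>u. indicator {0..} u *\<^sub>R (u powr (\<beta>-1) *\<^sub>R g (x+u)))"
proof (rule Bochner_Integration.integrable_bound[OF ker_u_dom_int[OF b(1), of M] _ AE_I2])
  show "(\<lambda>u. indicator {0..} u *\<^sub>R (u powr (\<beta>-1) *\<^sub>R g (x+u))) \<in> borel_measurable lborel" by measurable
next
  fix u :: real
  have M0: "M \<ge> 0" using dec by (rule dec_M_nonneg)
  show "norm (indicator {0..} u *\<^sub>R (u powr (\<beta>-1) *\<^sub>R g (x+u))) \<le>
        norm (M * (indicator {0..0+1} u * u powr (\<beta>-1) + indicator {0..} u * (1/(1+u)^2)))"
  proof (cases "u \<ge> 0")
    case True
    have "norm (g (x+u)) \<le> M / (1+(x+u))^2" using dec True x by auto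
    also have "\<dots> \<le> M / (1+u)^2" using True x M0 by (intro divide_left_mono power_mono mult_pos_pos) auto
    finally have gn: "norm (g (x+u)) \<le> M / (1+u)^2" .
    have "norm (indicator {0..} u *\<^sub>R (u powr (\<beta>-1) *\<^sub>R g (x+u))) = u powr (\<beta>-1) * norm (g (x+u))"
      using True by simp
    also have "\<dots> \<le> u powr (\<beta>-1) * (M / (1+u)^2)" using gn by (intro mult_left_mono) auto
    also have "\<dots> \<le> M * (indicator {0..0+1} u * u powr (\<beta>-1) + indicator {0..} u * (1/(1+u)^2))"
      by (rule ker_bound_u[OF True b M0])
    also have "\<dots> \<le> norm (M * (indicator {0..0+1} u * u powr (\<beta>-1) + indicator {0..} u * (1/(1+u)^2)))"
      by simp
    finally show ?thesis .
  qed simp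
qed


lemma quot_bound:
  fixes g g1 :: "real \<Rightarrow> complex"
  assumes dg1: "\<forall>y\<ge>0. norm (g1 y) \<le> M1 / (1+y)^2"
    and der: "\<forall>y\<ge>0. (g has_vector_derivative g1 y) (at y within {0..})"
    and t: "t > 0" and u: "u \<ge> 0" and h: "\<bar>h\<bar> < t/2" "h \<noteq> 0"
  shows "norm ((g (t + h + u) - g (t + u)) /\<^sub>R h) \<le> 3 * M1 / (1+u)^2"
proof -
  define S where "S = {u + t/2..}"
  define B where "B = 2 * M1 / (1+u)^2"
  have M1: "M1 \<ge> 0" using dg1 by (rule dec_M_nonneg)
  have Sg: "\<And>x. x \<in> S \<Longrightarrow> norm (g1 x) \<le> M1 / (1+u)^2"
  proof -
    fix x assume "x \<in> S"
    hence x: "x \<ge> u" "x \<ge> 0" using t u by (auto simp: S_def)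
    have "norm (g1 x) \<le> M1 / (1+x)^2" using dg1 x by auto
    also have "\<dots> \<le> M1 / (1+u)^2" using x u M1 by (intro divide_left_mono power_mono mult_pos_pos) auto
    finally show "norm (g1 x) \<le> M1 / (1+u)^2" .
  qed
  have x0: "t + u \<in> S" using t by (auto simp: S_def)
  have "norm (g (t + h + u) - g (t + u) - ((t + h + u) - (t + u)) *\<^sub>R g1 (t + u)) \<le> norm ((t + h + u) - (t + u)) * B"
  proof (rule vector_differentiable_bound_linearization[where S=S])
    show "(g has_vector_derivative g1 x) (at x within S)" if "x \<in> S" for x
    proof -
      have "x \<ge> 0" using that t u by (auto simp: S_def)
      hence "(g has_vector_derivative g1 x) (at x within {0..})" using der by auto
      thus ?thesis by (rule has_vector_derivative_within_subset) (use t u in \<open>auto simp: S_def\<close>)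
    qed
    show "closed_segment (t + u) (t + h + u) \<subseteq> S"
      using h t by (auto simp: S_def closed_segment_eq_real_ivl split: if_splits)
    show "norm (g1 x - g1 (t + u)) \<le> B" if "x \<in> S" for x
    proof -
      have "norm (g1 x - g1 (t + u)) \<le> norm (g1 x) + norm (g1 (t + u))" by (rule norm_triangle_ineq4)
      also have "\<dots> \<le> M1 / (1+u)^2 + M1 / (1+u)^2" using Sg[OF that] Sg[OF x0] by linarith
      finally show ?thesis by (simp add: B_def)
    qed
    show "t + u \<in> S" by (rule x0)
  qed
  hence lin: "norm (g (t + h + u) - g (t + u) - h *\<^sub>R g1 (t + u)) \<le> \<bar>h\<bar> * B" by simp
  have "(g (t + h + u) - g (t + u)) /\<^sub>R h = g1 (t + u) + (g (t + h + u) - g (t + u) - h *\<^sub>R g1 (t + u)) /\<^sub>R h"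
    using h by (simp add: algebra_simps)
  hence "norm ((g (t + h + u) - g (t + u)) /\<^sub>R h) \<le> norm (g1 (t + u)) + norm (g (t + h + u) - g (t + u) - h *\<^sub>R g1 (t + u)) / \<bar>h\<bar>"
    by (metis norm_scaleR norm_triangle_ineq abs_inverse divide_inverse_commute mult.commute)
  also have "\<dots> \<le> M1 / (1+u)^2 + B"
  proof -
    have "norm (g (t + h + u) - g (t + u) - h *\<^sub>R g1 (t + u)) / \<bar>h\<bar> \<le> B"
      using lin h by (simp add: divide_le_eq mult.commute)
    thus ?thesis using Sg[OF x0] by linarith
  qed
  also have "\<dots> = 3 * M1 / (1+u)^2" by (simp add: B_def field_simps)
  finally show ?thesis .
qed

lemma KU_deriv:
  fixes g g1 :: "real \<Rightarrow> complex" and \<beta> :: real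
  assumes b: "0 < \<beta>" "\<beta> \<le> 1" and gm[measurable]: "g \<in> borel_measurable borel"
    and g1m[measurable]: "g1 \<in> borel_measurable borel"
    and dg: "\<forall>y\<ge>0. norm (g y) \<le> M0 / (1+y)^2" and dg1: "\<forall>y\<ge>0. norm (g1 y) \<le> M1 / (1+y)^2"
    and der: "\<forall>y\<ge>0. (g has_vector_derivative g1 y) (at y within {0..})"
    and t: "t > 0"
  shows "(KU \<beta> g has_vector_derivative KU \<beta> g1 t) (at t)"
proof (rule quot_vd)
  have M1: "M1 \<ge> 0" using dg1 by (rule dec_M_nonneg)
  show "((\<lambda>h. (KU \<beta> g (t + h) - KU \<beta> g t) /\<^sub>R h) \<longlongrightarrow> KU \<beta> g1 t) (at 0)"
    unfolding tendsto_at_iff_sequentially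
  proof (intro allI impI)
    fix X :: "nat \<Rightarrow> real"
    assume X0: "\<forall>i. X i \<in> UNIV - {0}" and X: "X \<longlonglongrightarrow> 0"
    from tendstoD[OF X, of "t/2"] t obtain N where N: "\<And>i. i \<ge> N \<Longrightarrow> dist (X i) 0 < t/2"
      by (auto simp: eventually_sequentially)
    define Y where "Y i = X (i + N)" for i
    have Y: "\<bar>Y i\<bar> < t/2" "Y i \<noteq> 0" for i using N[of "i+N"] X0 by (auto simp: Y_def)
    have Ylim: "Y \<longlonglongrightarrow> 0" unfolding Y_def by (rule LIMSEQ_ignore_initial_segment[OF X])
    define q where "q i u = indicator {0..} u *\<^sub>R (u powr (\<beta>-1) *\<^sub>R ((g (t + Y i + u) - g (t + u)) /\<^sub>R Y i))" for i u
    define f where "f u = indicator {0..} u *\<^sub>R (u powr (\<beta>-1) *\<^sub>R g1 (t + u))" for u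
    define w where "w u = (3*M1) * (indicator {0..0+1} u * u powr (\<beta>-1) + indicator {0..} u * (1/(1+u)^2))" for u
    have eqq: "(KU \<beta> g (t + Y i) - KU \<beta> g t) /\<^sub>R Y i = integral\<^sup>L lborel (q i)" for i
    proof -
      have i1: "integrable lborel (\<lambda>u. indicator {0..} u *\<^sub>R (u powr (\<beta>-1) *\<^sub>R g ((t + Y i)+u)))"
        by (rule ker_u_int[OF b gm dg]) (use Y[of i] t in auto)
      have i2: "integrable lborel (\<lambda>u. indicator {0..} u *\<^sub>R (u powr (\<beta>-1) *\<^sub>R g (t+u)))"
        by (rule ker_u_int[OF b gm dg]) (use t in auto)
      have "(KU \<beta> g (t + Y i) - KU \<beta> g t) /\<^sub>R Y i
         = (LBINT u. (indicator {0..} u *\<^sub>R (u powr (\<beta>-1) *\<^sub>R g ((t + Y i)+u)) - indicator {0..} u *\<^sub>R (u powr (\<beta>-1) *\<^sub>R g (t+u)))) /\<^sub>R Y i"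
        unfolding KU_def using i1 i2 by (simp add: Bochner_Integration.integral_diff)
      also have "\<dots> = (LBINT u. (indicator {0..} u *\<^sub>R (u powr (\<beta>-1) *\<^sub>R g ((t + Y i)+u)) - indicator {0..} u *\<^sub>R (u powr (\<beta>-1) *\<^sub>R g (t+u))) /\<^sub>R Y i)"
        by (simp add: integral_scaleR_right)
      also have "\<dots> = integral\<^sup>L lborel (q i)"
        unfolding q_def by (intro Bochner_Integration.integral_cong refl) (simp add: algebra_simps)
      finally show ?thesis .
    qed
    have "(\<lambda>i. integral\<^sup>L lborel (q i)) \<longlonglongrightarrow> integral\<^sup>L lborel f"
    proof (rule integral_dominated_convergence[where w=w])
      show "f \<in> borel_measurable lborel" unfolding f_def by measurable
      show "q i \<in> borel_measurable lborel" for i unfolding q_def by measurable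
      show "integrable lborel w" unfolding w_def by (rule ker_u_dom_int[OF b(1)])
      show "AE u in lborel. (\<lambda>i. q i u) \<longlonglongrightarrow> f u"
      proof (rule AE_I2)
        fix u :: real
        show "(\<lambda>i. q i u) \<longlonglongrightarrow> f u"
        proof (cases "u \<ge> 0")
          case False thus ?thesis by (simp add: q_def f_def)
        next
          case True
          have "(g has_vector_derivative g1 (t+u)) (at (t+u) within {0..})" using der True t by auto
          moreover have "at (t+u) within {0..} = at (t+u)"
            by (rule at_within_interior) (use True t in auto)
          ultimately have "(g has_vector_derivative g1 (t+u)) (at (t+u))" by simp
          from vd_quot[OF this]
          have "\<forall>Z. (\<forall>i. Z i \<in> UNIV - {t+u}) \<longrightarrow> Z \<longlonglongrightarrow> t+u \<longrightarrow> ((\<lambda>z. (g z - g (t+u)) /\<^sub>R (z - (t+u))) \<circ> Z) \<longlonglongrightarrow> g1 (t+u)"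
            unfolding tendsto_at_iff_sequentially by blast
          hence "((\<lambda>z. (g z - g (t+u)) /\<^sub>R (z - (t+u))) \<circ> (\<lambda>i. t + Y i + u)) \<longlonglongrightarrow> g1 (t+u)"
            using Y(2) tendsto_add[OF tendsto_add[OF tendsto_const[of t] Ylim] tendsto_const[of u]]
            by (auto simp: add_ac)
          hence "(\<lambda>i. (g (t + Y i + u) - g (t+u)) /\<^sub>R Y i) \<longlonglongrightarrow> g1 (t+u)"
            by (simp add: o_def add_ac)
          hence "(\<lambda>i. indicator {0..} u *\<^sub>R (u powr (\<beta>-1) *\<^sub>R ((g (t + Y i + u) - g (t+u)) /\<^sub>R Y i))) \<longlonglongrightarrow> f u"
            unfolding f_def by (intro tendsto_scaleR tendsto_const)
          thus ?thesis by (simp add: q_def)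
        qed
      qed
      show "AE u in lborel. norm (q i u) \<le> w u" for i
      proof (rule AE_I2)
        fix u :: real
        show "norm (q i u) \<le> w u"
        proof (cases "u \<ge> 0")
          case False thus ?thesis using M1 by (simp add: q_def w_def indicator_def)
        next
          case True
          have "norm (q i u) = u powr (\<beta>-1) * norm ((g (t + Y i + u) - g (t + u)) /\<^sub>R Y i)"
            using True by (simp add: q_def abs_mult)
          also have "\<dots> \<le> u powr (\<beta>-1) * (3 * M1 / (1+u)^2)"
            by (intro mult_left_mono quot_bound[OF dg1 der t True Y(1) Y(2)]) auto
          also have "\<dots> \<le> w u" unfolding w_def
            using ker_bound_u[OF True b, of "3*M1"] M1 by simp
          finally show ?thesis .
        qed
      qed
    qed
    moreover have "integral\<^sup>L lborel f = KU \<beta> g1 t" unfolding KU_def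
      by (rule arg_cong[where f="integral\<^sup>L lborel"]) (simp add: fun_eq_iff f_def)
    ultimately have "(\<lambda>i. (KU \<beta> g (t + Y i) - KU \<beta> g t) /\<^sub>R Y i) \<longlonglongrightarrow> KU \<beta> g1 t"
      using eqq by simp
    hence "(\<lambda>i. ((\<lambda>h. (KU \<beta> g (t + h) - KU \<beta> g t) /\<^sub>R h) \<circ> X) (i + N)) \<longlonglongrightarrow> KU \<beta> g1 t"
      by (simp add: Y_def o_def)
    thus "((\<lambda>h. (KU \<beta> g (t + h) - KU \<beta> g t) /\<^sub>R h) \<circ> X) \<longlonglongrightarrow> KU \<beta> g1 t"
      by (rule LIMSEQ_offset)
  qed
qed


lemma schwartz_SW:
  assumes "schwartz_plus f"
  obtains D where "SW D" "\<And>t. t \<ge> 0 \<Longrightarrow> D 0 t = f t"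
  using assms unfolding schwartz_plus_def SW_def by blast

lemma nth_vderiv_Suc: "nth_vderiv (Suc k) g t = vector_derivative (nth_vderiv k g) (at t)"
  by (simp add: nth_vderiv_def)

lemma nth_vderiv_0: "nth_vderiv 0 g = g"
  by (simp add: nth_vderiv_def)

definition nn :: "real \<Rightarrow> nat" where "nn \<alpha> = nat \<lfloor>\<alpha>\<rfloor> + 1"
definition bb :: "real \<Rightarrow> real" where "bb \<alpha> = real (nn \<alpha>) - \<alpha>"

lemma bb_pos: "\<alpha> \<ge> 0 \<Longrightarrow> 0 < bb \<alpha>" and bb_le: "\<alpha> \<ge> 0 \<Longrightarrow> bb \<alpha> \<le> 1"
  unfolding bb_def nn_def by linarith+

definition Wf :: "(nat \<Rightarrow> real \<Rightarrow> complex) \<Rightarrow> real \<Rightarrow> real \<Rightarrow> complex" where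
  "Wf D \<alpha> s = ((-1) ^ nn \<alpha> / Gamma (bb \<alpha>)) *\<^sub>R KU (bb \<alpha>) (Dz D (nn \<alpha>)) s"

context
  fixes D :: "nat \<Rightarrow> real \<Rightarrow> complex" and \<psi> :: "real \<Rightarrow> complex"
  assumes SWD: "SW D" and D0: "\<And>t. t \<ge> 0 \<Longrightarrow> D 0 t = \<psi> t"
begin

lemma KU_Dz_deriv:
  assumes b: "0 < \<beta>" "\<beta> \<le> 1" and t: "t > 0"
  shows "(KU \<beta> (Dz D k) has_vector_derivative KU \<beta> (Dz D (Suc k)) t) (at t)"
proof -
  obtain M0 where M0: "\<forall>y\<ge>0. norm (Dz D k y) \<le> M0 / (1+y)^2" using Dz_dec[OF SWD] by blast
  obtain M1 where M1: "\<forall>y\<ge>0. norm (Dz D (Suc k) y) \<le> M1 / (1+y)^2" using Dz_dec[OF SWD] by blast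
  show ?thesis
    by (rule KU_deriv[OF b Dz_meas[OF SWD] Dz_meas[OF SWD] M0 M1 _ t]) (use Dz_deriv[OF SWD] in auto)
qed

lemma weyl_int_KU:
  assumes "x \<ge> 0"
  shows "weyl_int \<beta> \<psi> x = (1 / Gamma \<beta>) *\<^sub>R KU \<beta> (Dz D 0) x"
proof -
  have "(LINT s:{x..}|lborel. ((s - x) powr (\<beta> - 1)) *\<^sub>R \<psi> s) = (LINT s:{x..}|lborel. ((s - x) powr (\<beta> - 1)) *\<^sub>R Dz D 0 s)"
    unfolding set_lebesgue_integral_def
    by (intro Bochner_Integration.integral_cong refl) (use assms D0 in \<open>auto simp: indicator_def Dz_eq\<close>)
  thus ?thesis unfolding weyl_int_def by (simp add: KI_KU)
qed

lemma nth_vderiv_weyl: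
  assumes b: "0 < \<beta>" "\<beta> \<le> 1"
  shows "x > 0 \<Longrightarrow> nth_vderiv k (weyl_int \<beta> \<psi>) x = (1 / Gamma \<beta>) *\<^sub>R KU \<beta> (Dz D k) x"
proof (induction k arbitrary: x)
  case 0
  thus ?case by (simp add: nth_vderiv_0 weyl_int_KU)
next
  case (Suc k)
  have "((\<lambda>y. (1 / Gamma \<beta>) *\<^sub>R KU \<beta> (Dz D k) y) has_vector_derivative (1 / Gamma \<beta>) *\<^sub>R KU \<beta> (Dz D (Suc k)) x) (at x)"
    by (rule bounded_linear.has_vector_derivative[OF bounded_linear_scaleR_right KU_Dz_deriv[OF b Suc.prems]])
  hence "(nth_vderiv k (weyl_int \<beta> \<psi>) has_vector_derivative (1 / Gamma \<beta>) *\<^sub>R KU \<beta> (Dz D (Suc k)) x) (at x)"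
    by (rule has_vector_derivative_transform_within_open[where S="{0<..}"]) (use Suc in auto)
  thus ?case by (simp add: nth_vderiv_Suc vector_derivative_at)
qed

lemma weyl_deriv_eq:
  assumes "\<alpha> \<ge> 0" "s > 0"
  shows "weyl_deriv \<alpha> \<psi> s = Wf D \<alpha> s"
proof -
  have "weyl_deriv \<alpha> \<psi> s = ((-1) ^ nn \<alpha>) *\<^sub>R nth_vderiv (nn \<alpha>) (weyl_int (bb \<alpha>) \<psi>) s"
    unfolding weyl_deriv_def nn_def bb_def by simp
  also have "\<dots> = Wf D \<alpha> s"
    using nth_vderiv_weyl[OF bb_pos[OF assms(1)] bb_le[OF assms(1)] assms(2)] by (simp add: Wf_def)
  finally show ?thesis .
qed

lemma inversion:
  assumes a: "\<alpha> \<ge> 1" and t: "t > 0"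
  shows "\<psi> t = (1 / Gamma \<alpha>) *\<^sub>R (LINT s:{t..}|lborel. (s-t) powr (\<alpha>-1) *\<^sub>R Wf D \<alpha> s)"
proof -
  define n where "n = nn \<alpha>"
  define \<beta> where "\<beta> = bb \<alpha>"
  have b: "0 < \<beta>" "\<beta> \<le> 1" using bb_pos[of \<alpha>] bb_le[of \<alpha>] a by (auto simp: \<beta>_def)
  have n1: "n \<ge> 1" by (simp add: n_def nn_def)
  have ab: "\<alpha> + \<beta> = real n" by (simp add: \<beta>_def bb_def n_def)
  have a0: "\<alpha> > 0" using a by simp
  define c where "c = ((-1) ^ n / Gamma \<beta>)"
  have "(LINT s:{t..}|lborel. (s-t) powr (\<alpha>-1) *\<^sub>R Wf D \<alpha> s)
      = (LINT s:{t..}|lborel. c *\<^sub>R ((s-t) powr (\<alpha>-1) *\<^sub>R (LINT u:{s..}|lborel. (u-s) powr (\<beta>-1) *\<^sub>R Dz D n u)))"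
    unfolding set_lebesgue_integral_def[of _ "{t..}"]
    by (intro Bochner_Integration.integral_cong refl) (simp add: Wf_def KI_KU c_def n_def \<beta>_def)
  also have "\<dots> = c *\<^sub>R (LINT s:{t..}|lborel. (s-t) powr (\<alpha>-1) *\<^sub>R (LINT u:{s..}|lborel. (u-s) powr (\<beta>-1) *\<^sub>R Dz D n u))"
    unfolding set_lebesgue_integral_def[of _ "{t..}"] integral_scaleR_right[symmetric]
    by (intro Bochner_Integration.integral_cong refl) (simp add: scaleR_left_commute)
  also have "\<dots> = c *\<^sub>R (Beta \<alpha> \<beta> *\<^sub>R (LINT u:{t..}|lborel. (u-t) powr (\<alpha>+\<beta>-1) *\<^sub>R Dz D n u))"
    using Dz_semigroup[OF SWD a0 b(1), of t n] t by simp
  also have "(LINT u:{t..}|lborel. (u-t) powr (\<alpha>+\<beta>-1) *\<^sub>R Dz D n u)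
      = (LINT u:{t..}|lborel. (u-t) powr (real (n-1)) *\<^sub>R Dz D (0 + (n-1) + 1) u)"
    using ab n1 by (simp add: of_nat_diff)
  also have "\<dots> = ((-1)^(n-1+1) * fact (n-1)) *\<^sub>R Dz D 0 t"
    by (rule taylor[OF SWD]) (use t in auto)
  also have "Beta \<alpha> \<beta> = Gamma \<alpha> * Gamma \<beta> / fact (n-1)"
  proof -
    have nz: "\<alpha> + \<beta> \<notin> \<int>\<^sub>\<le>\<^sub>0"
    proof
      assume "\<alpha> + \<beta> \<in> \<int>\<^sub>\<le>\<^sub>0" hence "\<alpha> + \<beta> \<le> 0" by (rule nonpos_Ints_nonpos)
      thus False using a b by simp
    qed
    have "Gamma \<alpha> * Gamma \<beta> = Beta \<alpha> \<beta> * Gamma (\<alpha> + \<beta>)" by (rule Gamma_Gamma_Beta[OF nz])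
    also have "Gamma (\<alpha> + \<beta>) = fact (n-1)"
      using ab n1 Gamma_fact[of "n-1"] by (simp add: of_nat_diff add.commute)
    finally show ?thesis by (simp add: field_simps)
  qed
  finally have "(LINT s:{t..}|lborel. (s-t) powr (\<alpha>-1) *\<^sub>R Wf D \<alpha> s)
     = (c * (Gamma \<alpha> * Gamma \<beta> / fact (n-1)) * ((-1)^(n-1+1) * fact (n-1))) *\<^sub>R Dz D 0 t"
    by simp
  also have "c * (Gamma \<alpha> * Gamma \<beta> / fact (n-1)) * ((-1)^(n-1+1) * fact (n-1)) = Gamma \<alpha>"
  proof -
    have g: "Gamma \<beta> > 0" using b by (intro Gamma_real_pos)
    have "(-1::real)^n * (-1)^(n-1+1) = 1" using n1 by (simp flip: power_add)
    thus ?thesis using g unfolding c_def by (simp add: field_simps)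
  qed
  finally show ?thesis using t D0[of t] Gamma_real_pos[OF a0] by (simp add: Dz_eq)
qed

end


definition c0 :: "real \<Rightarrow> real" where
  "c0 \<beta> = (LBINT u. indicator {0..} u * (u powr (\<beta>-1) / (1+u)^2))"

lemma c0_int:
  fixes \<beta> :: real
  assumes "0 < \<beta>" "\<beta> \<le> 1"
  shows "integrable lborel (\<lambda>u. indicator {0..} u * (u powr (\<beta>-1) / (1+u)^2))"
proof (rule Bochner_Integration.integrable_bound[OF ker_u_dom_int[OF assms(1), of 1] _ AE_I2])
  show "(\<lambda>u. indicator {0..} u * (u powr (\<beta>-1) / (1+u)^2)) \<in> borel_measurable lborel" by measurable
next
  fix u :: real
  show "norm (indicator {0..} u * (u powr (\<beta>-1) / (1+u)^2)) \<le> norm (1 * (indicator {0..0+1} u * u powr (\<beta>-1) + indicator {0..} u * (1/(1+u)^2)))"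
  proof (cases "u \<ge> 0")
    case True
    have "u powr (\<beta>-1) * (1 / (1+u)^2) \<le> 1 * (indicator {0..0+1} u * u powr (\<beta>-1) + indicator {0..} u * (1/(1+u)^2))"
      by (rule ker_bound_u[OF True assms]) simp
    moreover have "0 \<le> indicator {0..0+1} u * u powr (\<beta>-1) + indicator {0..} u * (1/(1+u)^2)"
      using True by (auto simp: indicator_def)
    ultimately show ?thesis using True by simp
  qed simp
qed

lemma KU_decay:
  fixes g :: "real \<Rightarrow> complex"
  assumes b: "0 < \<beta>" "\<beta> \<le> 1" and gm[measurable]: "g \<in> borel_measurable borel"
    and dec: "\<forall>y\<ge>0. norm (g y) \<le> M / (1+y)^(k+2)" and s: "s \<ge> 0"
  shows "norm (KU \<beta> g s) \<le> M * c0 \<beta> / (1+s)^k"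
proof -
  have M0: "M \<ge> 0" using dec by (rule dec_M_nonneg)
  have dec2: "\<forall>y\<ge>0. norm (g y) \<le> M / (1+y)^2"
  proof (intro allI impI)
    fix y :: real assume y: "y \<ge> 0"
    have "norm (g y) \<le> M / (1+y)^(k+2)" using dec y by auto
    also have "\<dots> \<le> M / (1+y)^2" using y M0 by (intro divide_left_mono power_increasing) auto
    finally show "norm (g y) \<le> M / (1+y)^2" .
  qed
  have i1: "integrable lborel (\<lambda>u. norm (indicator {0..} u *\<^sub>R (u powr (\<beta>-1) *\<^sub>R g (s+u))))"
    by (intro integrable_norm ker_u_int[OF b gm dec2 s])
  have i2: "integrable lborel (\<lambda>u. (M / (1+s)^k) * (indicator {0..} u * (u powr (\<beta>-1) / (1+u)^2)))"
    by (intro integrable_mult_right c0_int[OF b])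
  have "norm (KU \<beta> g s) \<le> (LBINT u. norm (indicator {0..} u *\<^sub>R (u powr (\<beta>-1) *\<^sub>R g (s+u))))"
    unfolding KU_def by (rule integral_norm_bound)
  also have "\<dots> \<le> (LBINT u. (M / (1+s)^k) * (indicator {0..} u * (u powr (\<beta>-1) / (1+u)^2)))"
  proof (rule integral_mono[OF i1 i2])
    fix u :: real
    show "norm (indicator {0..} u *\<^sub>R (u powr (\<beta>-1) *\<^sub>R g (s+u))) \<le> (M / (1+s)^k) * (indicator {0..} u * (u powr (\<beta>-1) / (1+u)^2))"
    proof (cases "u \<ge> 0")
      case True
      have "norm (g (s+u)) \<le> M / (1+(s+u))^(k+2)" using dec True s by auto
      also have "\<dots> \<le> M / ((1+s)^k * (1+u)^2)"
      proof (intro divide_left_mono M0)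
        have "(1+s)^k \<le> (1+(s+u))^k" using True s by (intro power_mono) auto
        moreover have "(1+u)^2 \<le> (1+(s+u))^2" using True s by (intro power_mono) auto
        ultimately have "(1+s)^k * (1+u)^2 \<le> (1+(s+u))^k * (1+(s+u))^2"
          using True s by (intro mult_mono) auto
        thus "(1+s)^k * (1+u)^2 \<le> (1+(s+u))^(k+2)" by (simp only: power_add)
        show "0 < (1+(s+u))^(k+2) * ((1+s)^k * (1+u)^2)" using True s by simp
      qed
      finally have gn: "norm (g (s+u)) \<le> M / ((1+s)^k * (1+u)^2)" .
      have "norm (indicator {0..} u *\<^sub>R (u powr (\<beta>-1) *\<^sub>R g (s+u))) = u powr (\<beta>-1) * norm (g (s+u))"
        using True by simp
      also have "\<dots> \<le> u powr (\<beta>-1) * (M / ((1+s)^k * (1+u)^2))"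
        using gn by (intro mult_left_mono) auto
      also have "\<dots> = (M / (1+s)^k) * (indicator {0..} u * (u powr (\<beta>-1) / (1+u)^2))"
        using True by (simp add: field_simps)
      finally show ?thesis .
    qed simp
  qed
  also have "\<dots> = (M / (1+s)^k) * c0 \<beta>"
    unfolding c0_def by (rule integral_mult_right_zero)
  also have "\<dots> = M * c0 \<beta> / (1+s)^k" by simp
  finally show ?thesis .
qed


definition Cp :: "real \<Rightarrow> real" where
  "Cp p = (if p = 1 then 1 else (p/(p-1) - 1) powr (-(p-1)/p))"

lemma tail_powr_int:
  fixes t q :: real
  assumes t: "t > 0" and q: "q > 1"
  shows "integrable lborel (\<lambda>s. indicator {t..} s * s powr (-q))"
    and "(LBINT s. indicator {t..} s * s powr (-q)) = t powr (1-q) / (q-1)"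
proof -
  have hi: "((\<lambda>x. x powr (-q)) has_integral -(t powr (-q+1)) / (-q+1)) {t..}"
    by (rule has_integral_powr_to_inf) (use t q in auto)
  hence "(\<lambda>x. x powr (-q)) absolutely_integrable_on {t..}"
    by (intro nonnegative_absolutely_integrable_1) (auto simp: integrable_on_def)
  hence si: "set_integrable lborel {t..} (\<lambda>x. x powr (-q))"
    by (simp add: absolutely_integrable_on_def set_integrable_def integrable_completion)
  thus "integrable lborel (\<lambda>s. indicator {t..} s * s powr (-q))"
    by (simp add: set_integrable_def)
  have "(LBINT s. indicator {t..} s * s powr (-q)) = (LINT s:{t..}|lborel. s powr (-q))"
    by (simp add: set_lebesgue_integral_def)
  also have "\<dots> = integral {t..} (\<lambda>x. x powr (-q))" by (rule set_borel_integral_eq_integral(2)[OF si])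
  also have "\<dots> = -(t powr (-q+1)) / (-q+1)" using hi by (rule integral_unique)
  also have "\<dots> = t powr (1-q) / (q-1)" using q by (simp add: field_simps)
  finally show "(LBINT s. indicator {t..} s * s powr (-q)) = t powr (1-q) / (q-1)" .
qed

lemma holder_tail:
  fixes F :: "real \<Rightarrow> real" and p t :: real
  assumes p: "p \<ge> 1" and t: "t > 0" and Fm[measurable]: "F \<in> borel_measurable borel"
    and F0: "\<And>s. F s \<ge> 0" and Fi: "integrable lborel (\<lambda>s. F s powr p)"
  shows "integrable lborel (\<lambda>s. indicator {t..} s * (F s / s))"
    and "(LBINT s. indicator {t..} s * (F s / s)) \<le> Cp p * t powr (-1/p) * (LBINT s. F s powr p) powr (1/p)"
proof -
  have "integrable lborel (\<lambda>s. indicator {t..} s * (F s / s)) \<and>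
        (LBINT s. indicator {t..} s * (F s / s)) \<le> Cp p * t powr (-1/p) * (LBINT s. F s powr p) powr (1/p)"
  proof (cases "p = 1")
    case True
    have FF: "F s powr p = F s" for s using True F0[of s] by simp
    have Fi1: "integrable lborel F" using Fi unfolding FF by simp
    have bnd: "indicator {t..} s * (F s / s) \<le> F s / t" for s
    proof (cases "s \<ge> t")
      case True
      have "F s / s \<le> F s / t" using True t F0[of s] by (intro divide_left_mono) auto
      thus ?thesis using True by simp
    qed (use F0 t in auto)
    have i: "integrable lborel (\<lambda>s. indicator {t..} s * (F s / s))"
    proof (rule Bochner_Integration.integrable_bound[OF integrable_divide[OF Fi1, of t] _ AE_I2])
      show "(\<lambda>s. indicator {t..} s * (F s / s)) \<in> borel_measurable lborel" by measurable
      fix s show "norm (indicator {t..} s * (F s / s)) \<le> norm (F s / t)"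
        using bnd[of s] F0[of s] t by (auto simp: indicator_def)
    qed
    have "(LBINT s. indicator {t..} s * (F s / s)) \<le> (LBINT s. F s / t)"
      by (rule integral_mono[OF i integrable_divide[OF Fi1]]) (rule bnd)
    also have "\<dots> = Cp p * t powr (-1/p) * (LBINT s. F s powr p) powr (1/p)"
    proof -
      have "(LBINT s. F s) \<ge> 0" using F0 by (intro Bochner_Integration.integral_nonneg) auto
      moreover have FF': "(\<lambda>s. F s powr p) = F" using FF by auto
      ultimately show ?thesis using True t unfolding FF' by (simp add: Cp_def powr_minus_divide)
    qed
    finally show ?thesis using i by simp
  next
    case False
    hence p1: "p > 1" using p by simp
    define q where "q = p / (p-1)"
    have q1: "q > 1" using p1 by (simp add: q_def field_simps)
    have pq: "1/p + 1/q = 1" using p1 by (simp add: q_def field_simps)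
    have invq: "1/q = (p-1)/p" using p1 by (simp add: q_def)
    note Bi = tail_powr_int(1)[OF t q1] and Bv = tail_powr_int(2)[OF t q1]
    define B where "B = t powr (1-q) / (q-1)"
    have B0: "B > 0" using t q1 by (simp add: B_def)
    define A where "A = (LBINT s. F s powr p)"
    have A0: "A \<ge> 0" unfolding A_def by (intro Bochner_Integration.integral_nonneg) auto
    have young: "F s * (1/s) \<le> F s powr p / p + (1/s) powr q / q" if "s > 0" for s
      by (rule Youngs_inequality[OF p1 q1 pq F0]) (use that in auto)
    have inv_powr: "(1/s) powr q = s powr (-q)" if "s > 0" for s
      using that by (simp add: powr_minus_divide powr_divide)
    have dom: "integrable lborel (\<lambda>s. F s powr p / p + indicator {t..} s * s powr (-q) / q)"
      using Fi Bi by (intro Bochner_Integration.integrable_add integrable_divide) auto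
    have i: "integrable lborel (\<lambda>s. indicator {t..} s * (F s / s))"
    proof (rule Bochner_Integration.integrable_bound[OF dom _ AE_I2])
      show "(\<lambda>s. indicator {t..} s * (F s / s)) \<in> borel_measurable lborel" by measurable
      fix s
      show "norm (indicator {t..} s * (F s / s)) \<le> norm (F s powr p / p + indicator {t..} s * s powr (-q) / q)"
      proof (cases "s \<ge> t")
        case True
        have "F s / s \<le> F s powr p / p + s powr (-q) / q"
          using young[of s] inv_powr[of s] True t by simp
        thus ?thesis using True t F0[of s] p1 q1 by (simp add: indicator_def)
      next
        case False
        thus ?thesis using p1 by (simp add: indicator_def)
      qed
    qed
    have main: "(LBINT s. indicator {t..} s * (F s / s)) \<le> A powr (1/p) * B powr (1/q)"
    proof (cases "A = 0")
      case True
      have "AE s in lborel. F s powr p = 0"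
        using integral_nonneg_eq_0_iff_AE[OF Fi] True F0 unfolding A_def by auto
      hence "AE s in lborel. indicator {t..} s * (F s / s) = 0"
        by eventually_elim simp
      hence "(LBINT s. indicator {t..} s * (F s / s)) = 0"
        by (rule integral_eq_zero_AE)
      thus ?thesis using True by simp
    next
      case False
      hence Ap: "A > 0" using A0 by simp
      define a where "a = A powr (1/p)"
      define b where "b = B powr (1/q)"
      have a0: "a > 0" and b0: "b > 0" using Ap B0 by (auto simp: a_def b_def)
      have ap: "a powr p = A" using Ap p1 by (simp add: a_def powr_powr)
      have bq: "b powr q = B" using B0 q1 by (simp add: b_def powr_powr)
      have pw: "indicator {t..} s * (F s / s) \<le> (a * b) * (F s powr p / (p * A) + indicator {t..} s * s powr (-q) / (q * B))" for s
      proof (cases "s \<ge> t")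
        case True
        have "(F s / a) * ((1/s) / b) \<le> (F s / a) powr p / p + ((1/s) / b) powr q / q"
          by (rule Youngs_inequality[OF p1 q1 pq]) (use F0 a0 b0 True t in auto)
        also have "(F s / a) powr p = F s powr p / A" using F0[of s] a0 ap by (simp add: powr_divide)
        also have "((1/s) / b) powr q = s powr (-q) / B" using True t b0 bq by (simp add: powr_divide powr_mult powr_minus_divide)
        finally have y: "(F s / a) * ((1/s) / b) \<le> F s powr p / A / p + s powr (-q) / B / q" .
        have "F s / s = (a * b) * ((F s / a) * ((1/s) / b))" using a0 b0 True t by (simp add: field_simps)
        also have "\<dots> \<le> (a * b) * (F s powr p / A / p + s powr (-q) / B / q)"
          using y a0 b0 by (intro mult_left_mono) auto
        finally show ?thesis using True by (simp add: field_simps)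
      next
        case False
        have "0 \<le> (a * b) * (F s powr p / (p * A) + 0)" using a0 b0 Ap p1 by simp
        thus ?thesis using False by (simp add: indicator_def)
      qed
      have di: "integrable lborel (\<lambda>s. (a * b) * (F s powr p / (p * A) + indicator {t..} s * s powr (-q) / (q * B)))"
        using Fi Bi by (intro integrable_mult_right Bochner_Integration.integrable_add integrable_divide) auto
      have "(LBINT s. indicator {t..} s * (F s / s)) \<le> (LBINT s. (a * b) * (F s powr p / (p * A) + indicator {t..} s * s powr (-q) / (q * B)))"
        by (rule integral_mono[OF i di pw])
      also have "\<dots> = (a * b) * (A / (p * A) + B / (q * B))"
        using Fi Bi Bv by (simp add: Bochner_Integration.integral_add A_def B_def)
      also have "\<dots> = a * b" using Ap B0 pq by (simp add: field_simps)
      finally show ?thesis by (simp add: a_def b_def)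
    qed
    also have "A powr (1/p) * B powr (1/q) = Cp p * t powr (-1/p) * A powr (1/p)"
    proof -
      have e1: "B powr (1/q) = t powr ((1-q) * (1/q)) / (q-1) powr (1/q)"
        using t q1 by (simp add: B_def powr_divide powr_powr)
      have e2: "(1-q) * (1/q) = -1/p" using p1 by (simp add: q_def field_simps)
      have c: "1 / (q-1) powr (1/q) = Cp p"
      proof -
        have "1 / (q-1) powr (1/q) = (q-1) powr (-(1/q))" using q1 by (simp add: powr_minus_divide)
        also have "-(1/q) = -(p-1)/p" using invq p1 by (simp add: field_simps)
        finally show ?thesis using False by (simp add: Cp_def q_def)
      qed
      have "B powr (1/q) = t powr (-1/p) * (1 / (q-1) powr (1/q))"
        unfolding e1 e2 by simp
      hence "B powr (1/q) = t powr (-1/p) * Cp p" unfolding c .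
      thus ?thesis by (simp add: mult_ac)
    qed
    finally show ?thesis using i by (simp add: A_def)
  qed
  thus "integrable lborel (\<lambda>s. indicator {t..} s * (F s / s))"
    and "(LBINT s. indicator {t..} s * (F s / s)) \<le> Cp p * t powr (-1/p) * (LBINT s. F s powr p) powr (1/p)"
    by auto
qed


lemma powr_convex0:
  fixes x y l p :: real
  assumes p: "p \<ge> 1" and x: "x \<ge> 0" and y: "y \<ge> 0" and l: "0 \<le> l" "l \<le> 1"
  shows "(l * x + (1 - l) * y) powr p \<le> l * x powr p + (1 - l) * y powr p"
proof -
  have le1: "c powr p \<le> c" if "0 \<le> c" "c \<le> 1" for c :: real
  proof (cases "c = 0")
    case False
    hence "c powr p \<le> c powr 1" using that p by (intro powr_mono') auto
    thus ?thesis using that by simp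
  qed simp
  show ?thesis
  proof (cases "x = 0 \<or> y = 0")
    case True
    thus ?thesis
    proof
      assume x0: "x = 0"
      have "((1 - l) * y) powr p = (1 - l) powr p * y powr p" using y l by (simp add: powr_mult)
      also have "\<dots> \<le> (1 - l) * y powr p" using le1[of "1-l"] l by (intro mult_right_mono) auto
      finally show ?thesis using x0 by simp
    next
      assume y0: "y = 0"
      have "(l * x) powr p = l powr p * x powr p" using x l by (simp add: powr_mult)
      also have "\<dots> \<le> l * x powr p" using le1[of l] l by (intro mult_right_mono) auto
      finally show ?thesis using y0 by simp
    qed
  next
    case False
    hence "x > 0" "y > 0" using x y by auto
    thus ?thesis using powr_convex[OF p] l unfolding convex_on_def by auto
  qed
qed

lemma minkowski_real:
  fixes u v w :: "real \<Rightarrow> real" and p :: real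
  assumes p: "p \<ge> 1"
    and um[measurable]: "u \<in> borel_measurable borel" and vm[measurable]: "v \<in> borel_measurable borel"
    and wm[measurable]: "w \<in> borel_measurable borel"
    and u0: "\<And>x. u x \<ge> 0" and v0: "\<And>x. v x \<ge> 0" and w0: "\<And>x. w x \<ge> 0"
    and wuv: "\<And>x. w x \<le> u x + v x"
    and ui: "integrable lborel (\<lambda>x. u x powr p)" and vi: "integrable lborel (\<lambda>x. v x powr p)"
  shows "integrable lborel (\<lambda>x. w x powr p)"
    and "(LBINT x. w x powr p) powr (1/p) \<le> (LBINT x. u x powr p) powr (1/p) + (LBINT x. v x powr p) powr (1/p)"
proof -
  have p0: "p > 0" using p by simp
  have uvi: "integrable lborel (\<lambda>x. (u x + v x) powr p)"
  proof (rule Bochner_Integration.integrable_bound[OF integrable_mult_right[OF Bochner_Integration.integrable_add[OF ui vi], of "2 powr p"] _ AE_I2])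
    show "(\<lambda>x. (u x + v x) powr p) \<in> borel_measurable lborel" by measurable
    fix x
    have "(u x + v x) powr p \<le> (2 * max (u x) (v x)) powr p"
      using u0[of x] v0[of x] p0 by (intro powr_mono2) auto
    also have "\<dots> = 2 powr p * max (u x) (v x) powr p" using u0[of x] v0[of x] by (simp add: powr_mult)
    also have "\<dots> \<le> 2 powr p * (u x powr p + v x powr p)"
      by (intro mult_left_mono) (auto simp: max_def)
    finally show "norm ((u x + v x) powr p) \<le> norm (2 powr p * (u x powr p + v x powr p))" by simp
  qed
  have wle: "w x powr p \<le> (u x + v x) powr p" for x
    using wuv[of x] w0[of x] p0 by (intro powr_mono2) auto
  show wi: "integrable lborel (\<lambda>x. w x powr p)"
    by (rule Bochner_Integration.integrable_bound[OF uvi _ AE_I2]) (use wle u0 v0 w0 in auto)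
  define a where "a = (LBINT x. u x powr p) powr (1/p)"
  define b where "b = (LBINT x. v x powr p) powr (1/p)"
  have Ia: "(LBINT x. u x powr p) \<ge> 0" and Ib: "(LBINT x. v x powr p) \<ge> 0"
    by (auto intro!: Bochner_Integration.integral_nonneg)
  have a0: "a \<ge> 0" and b0: "b \<ge> 0" by (auto simp: a_def b_def)
  have ap: "a powr p = (LBINT x. u x powr p)" using Ia p0 by (simp add: a_def powr_powr)
  have bp: "b powr p = (LBINT x. v x powr p)" using Ib p0 by (simp add: b_def powr_powr)
  show "(LBINT x. w x powr p) powr (1/p) \<le> (LBINT x. u x powr p) powr (1/p) + (LBINT x. v x powr p) powr (1/p)"
    unfolding a_def[symmetric] b_def[symmetric]
  proof (rule field_le_epsilon)
    fix e :: real assume e: "e > 0"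
    define a' where "a' = a + e/2"
    define b' where "b' = b + e/2"
    have a'0: "a' > 0" and b'0: "b' > 0" using a0 b0 e by (auto simp: a'_def b'_def)
    define l where "l = a' / (a' + b')"
    have l: "0 \<le> l" "l \<le> 1" using a'0 b'0 by (auto simp: l_def)
    have pt: "(u x + v x) powr p \<le> (a' + b') powr p * (l * (u x powr p / a' powr p) + (1 - l) * (v x powr p / b' powr p))" for x
    proof -
      have l1: "1 - l = b' / (a' + b')" using a'0 b'0 by (simp add: l_def field_simps)
      have t1: "l * (u x / a') = u x / (a' + b')" using a'0 b'0 by (simp add: l_def)
      have t2: "(1 - l) * (v x / b') = v x / (a' + b')" using a'0 b'0 by (simp add: l1)
      have e1: "(u x + v x) / (a' + b') = l * (u x / a') + (1 - l) * (v x / b')"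
        unfolding t1 t2 by (simp add: add_divide_distrib)
      have "((u x + v x) / (a' + b')) powr p \<le> l * (u x / a') powr p + (1 - l) * (v x / b') powr p"
        unfolding e1 by (rule powr_convex0[OF p _ _ l]) (use u0 v0 a'0 b'0 in auto)
      also have "(u x / a') powr p = u x powr p / a' powr p" using u0[of x] a'0 by (simp add: powr_divide)
      also have "(v x / b') powr p = v x powr p / b' powr p" using v0[of x] b'0 by (simp add: powr_divide)
      also have "((u x + v x) / (a' + b')) powr p = (u x + v x) powr p / (a' + b') powr p"
        using u0[of x] v0[of x] a'0 b'0 by (simp add: powr_divide)
      finally show ?thesis using a'0 b'0 by (simp add: field_simps)
    qed
    have ri: "integrable lborel (\<lambda>x. (a' + b') powr p * (l * (u x powr p / a' powr p) + (1 - l) * (v x powr p / b' powr p)))"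
      using ui vi by (intro integrable_mult_right Bochner_Integration.integrable_add integrable_divide) auto
    have "(LBINT x. w x powr p) \<le> (LBINT x. (u x + v x) powr p)"
      by (rule integral_mono[OF wi uvi wle])
    also have "\<dots> \<le> (LBINT x. (a' + b') powr p * (l * (u x powr p / a' powr p) + (1 - l) * (v x powr p / b' powr p)))"
      by (rule integral_mono[OF uvi ri pt])
    also have "\<dots> = (a' + b') powr p * (l * (a powr p / a' powr p) + (1 - l) * (b powr p / b' powr p))"
      using ui vi by (simp add: Bochner_Integration.integral_add ap bp)
    also have "\<dots> \<le> (a' + b') powr p * (l * 1 + (1 - l) * 1)"
    proof -
      have "a powr p \<le> a' powr p" using a0 e p0 by (intro powr_mono2) (auto simp: a'_def)
      hence "a powr p / a' powr p \<le> 1" using a'0 by simp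
      moreover have "b powr p \<le> b' powr p" using b0 e p0 by (intro powr_mono2) (auto simp: b'_def)
      hence "b powr p / b' powr p \<le> 1" using b'0 by simp
      ultimately show ?thesis using l a'0 b'0
        by (intro mult_left_mono add_mono mult_left_mono) auto
    qed
    also have "\<dots> = (a' + b') powr p" by simp
    finally have "(LBINT x. w x powr p) \<le> (a' + b') powr p" .
    hence "(LBINT x. w x powr p) powr (1/p) \<le> ((a' + b') powr p) powr (1/p)"
      using p0 by (intro powr_mono2) (auto intro!: Bochner_Integration.integral_nonneg simp: w0)
    also have "\<dots> = a' + b'" using a'0 b'0 p0 by (simp add: powr_powr)
    finally show "(LBINT x. w x powr p) powr (1/p) \<le> a + b + e" by (simp add: a'_def b'_def)
  qed
qed


lemma KU_meas[measurable]:
  assumes [measurable]: "g \<in> borel_measurable borel"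
  shows "KU \<beta> g \<in> borel_measurable borel"
  unfolding KU_def by measurable

definition Fn :: "(nat \<Rightarrow> real \<Rightarrow> complex) \<Rightarrow> real \<Rightarrow> real \<Rightarrow> real" where
  "Fn D \<alpha> s = indicator {0<..} s * (s powr \<alpha> * norm (Wf D \<alpha> s))"

context
  fixes D :: "nat \<Rightarrow> real \<Rightarrow> complex" and \<psi> :: "real \<Rightarrow> complex"
  assumes SWD: "SW D" and D0: "\<And>t. t \<ge> 0 \<Longrightarrow> D 0 t = \<psi> t"
begin

lemma Wf_meas[measurable]: "Wf D \<alpha> \<in> borel_measurable borel"
proof -
  have m: "KU (bb \<alpha>) (Dz D (nn \<alpha>)) \<in> borel_measurable borel" by (rule KU_meas[OF Dz_meas[OF SWD]])
  have e: "Wf D \<alpha> = (\<lambda>s. ((-1) ^ nn \<alpha> / Gamma (bb \<alpha>)) *\<^sub>R KU (bb \<alpha>) (Dz D (nn \<alpha>)) s)"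
    by (rule ext) (simp add: Wf_def)
  show ?thesis unfolding e by (intro borel_measurable_scaleR borel_measurable_const m)
qed


lemma Fn_meas[measurable]: "Fn D \<alpha> \<in> borel_measurable borel"
  unfolding Fn_def by measurable

lemma Fn_nonneg: "Fn D \<alpha> s \<ge> 0"
  by (simp add: Fn_def)

lemma Wf_decay:
  assumes a: "\<alpha> \<ge> 0"
  shows "\<exists>C. \<forall>s\<ge>0. norm (Wf D \<alpha> s) \<le> C / (1+s)^k"
proof -
  obtain M where M: "\<forall>y\<ge>0. norm (Dz D (nn \<alpha>) y) \<le> M / (1+y)^(k+2)"
    using Dz_dec[OF SWD] by blast
  have b: "0 < bb \<alpha>" "bb \<alpha> \<le> 1" using bb_pos[OF a] bb_le[OF a] by auto
  show ?thesis
  proof (intro exI allI impI)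
    fix s :: real assume s: "s \<ge> 0"
    have "norm (Wf D \<alpha> s) = \<bar>1 / Gamma (bb \<alpha>)\<bar> * norm (KU (bb \<alpha>) (Dz D (nn \<alpha>)) s)"
      by (simp add: Wf_def power_abs)
    also have "\<dots> \<le> \<bar>1 / Gamma (bb \<alpha>)\<bar> * (M * c0 (bb \<alpha>) / (1+s)^k)"
      by (intro mult_left_mono KU_decay[OF b Dz_meas[OF SWD] M s]) auto
    finally show "norm (Wf D \<alpha> s) \<le> (\<bar>1 / Gamma (bb \<alpha>)\<bar> * (M * c0 (bb \<alpha>))) / (1+s)^k" by simp
  qed
qed

lemma Fn_int:
  assumes a: "\<alpha> \<ge> 0" and p: "p \<ge> 1"
  shows "integrable lborel (\<lambda>s. Fn D \<alpha> s powr p)"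
proof -
  define k where "k = nat \<lceil>\<alpha>\<rceil> + 2"
  have k: "real k \<ge> \<alpha> + 2" unfolding k_def by linarith
  obtain C where C: "\<forall>s\<ge>0. norm (Wf D \<alpha> s) \<le> C / (1+s)^k" using Wf_decay[OF a] by blast
  have C0: "C \<ge> 0" using C by (rule dec_M_nonneg)
  have dom: "integrable lborel (\<lambda>s. C powr p * (indicator {0..} s *\<^sub>R (1/(1+s)^2)))"
    using set_int_inv_sq by (intro integrable_mult_right) (simp add: set_integrable_def)
  show ?thesis
  proof (rule Bochner_Integration.integrable_bound[OF dom _ AE_I2])
    show "(\<lambda>s. Fn D \<alpha> s powr p) \<in> borel_measurable lborel" by measurable
    fix s :: real
    show "norm (Fn D \<alpha> s powr p) \<le> norm (C powr p * (indicator {0..} s *\<^sub>R (1/(1+s)^2)))"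
    proof (cases "s > 0")
      case False thus ?thesis by (simp add: Fn_def)
    next
      case True
      have "Fn D \<alpha> s = s powr \<alpha> * norm (Wf D \<alpha> s)" using True by (simp add: Fn_def)
      also have "\<dots> \<le> (1+s) powr \<alpha> * (C / (1+s)^k)"
        using C True a by (intro mult_mono powr_mono2) auto
      also have "\<dots> = C * (1+s) powr (\<alpha> - real k)"
        using True by (simp add: powr_diff powr_realpow)
      also have "\<dots> \<le> C * (1+s) powr (-2)"
        using True k C0 by (intro mult_left_mono powr_mono) auto
      finally have Fb: "Fn D \<alpha> s \<le> C * (1+s) powr (-2)" .
      have "Fn D \<alpha> s powr p \<le> (C * (1+s) powr (-2)) powr p"
        using Fb Fn_nonneg[of \<alpha> s] p by (intro powr_mono2) auto
      also have "\<dots> = C powr p * (1+s) powr (-2*p)"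
        using True C0 by (simp add: powr_mult powr_powr)
      also have "\<dots> \<le> C powr p * (1+s) powr (-2)"
        using True p by (intro mult_left_mono powr_mono) auto
      also have "(1+s) powr (-2) = 1/(1+s)^2"
        using True by (simp add: powr_minus_divide powr_realpow)
      finally show ?thesis using True by simp
    qed
  qed
qed

lemma wnorm_Fn:
  assumes a: "\<alpha> \<ge> 0" and p: "p \<ge> 1"
  shows "wnorm \<alpha> p \<psi> = (1 / Gamma (\<alpha> + 1)) * (LBINT s. Fn D \<alpha> s powr p) powr (1/p)"
proof -
  have "(LINT t:{0<..}|lborel. norm (weyl_deriv \<alpha> \<psi> t) powr p * t powr (\<alpha> * p)) = (LBINT s. Fn D \<alpha> s powr p)"
    unfolding set_lebesgue_integral_def
  proof (intro Bochner_Integration.integral_cong refl)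
    fix s :: real
    show "indicator {0<..} s *\<^sub>R (norm (weyl_deriv \<alpha> \<psi> s) powr p * s powr (\<alpha> * p)) = Fn D \<alpha> s powr p"
    proof (cases "s > 0")
      case True
      have "Fn D \<alpha> s powr p = (s powr \<alpha>) powr p * norm (Wf D \<alpha> s) powr p"
        using True by (simp add: Fn_def powr_mult)
      thus ?thesis using True weyl_deriv_eq[OF SWD D0 a True] by (simp add: powr_powr mult_ac)
    qed (simp add: Fn_def)
  qed
  thus ?thesis unfolding wnorm_def by simp
qed

lemma Wf_cont: 
  assumes a: "\<alpha> \<ge> 0"
  shows "continuous_on {0<..} (Wf D \<alpha>)"
proof (rule continuous_at_imp_continuous_on, intro ballI)
  fix s :: real assume "s \<in> {0<..}"
  hence "(KU (bb \<alpha>) (Dz D (nn \<alpha>)) has_vector_derivative KU (bb \<alpha>) (Dz D (Suc (nn \<alpha>))) s) (at s)"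
    using KU_Dz_deriv[OF SWD D0 bb_pos[OF a] bb_le[OF a]] by auto
  hence "isCont (KU (bb \<alpha>) (Dz D (nn \<alpha>))) s"
    using has_vector_derivative_continuous by blast
  moreover have "Wf D \<alpha> = (\<lambda>s. ((-1) ^ nn \<alpha> / Gamma (bb \<alpha>)) *\<^sub>R KU (bb \<alpha>) (Dz D (nn \<alpha>)) s)"
    by (rule ext) (simp add: Wf_def)
  ultimately show "isCont (Wf D \<alpha>) s" by (auto intro!: continuous_intros)
qed

lemma pointwise_bound:
  assumes a: "\<alpha> \<ge> 1" and p: "p \<ge> 1" and t: "t > 0"
  shows "t powr (1/p) * norm (\<psi> t) \<le> (\<alpha> * Cp p) * wnorm \<alpha> p \<psi>"
proof -
  have a0: "\<alpha> \<ge> 0" and a0': "\<alpha> > 0" using a by auto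
  have Ga: "Gamma \<alpha> > 0" by (rule Gamma_real_pos[OF a0'])
  note ht = holder_tail[OF p t Fn_meas Fn_nonneg Fn_int[OF a0 p]]
  define A where "A = (LBINT s. Fn D \<alpha> s powr p)"
  have pw: "norm (indicator {t..} s *\<^sub>R ((s-t) powr (\<alpha>-1) *\<^sub>R Wf D \<alpha> s)) \<le> indicator {t..} s * (Fn D \<alpha> s / s)" for s
  proof (cases "s \<ge> t")
    case True
    have s0: "s > 0" using True t by simp
    have "norm (indicator {t..} s *\<^sub>R ((s-t) powr (\<alpha>-1) *\<^sub>R Wf D \<alpha> s)) = (s-t) powr (\<alpha>-1) * norm (Wf D \<alpha> s)"
      using True by simp
    also have "\<dots> \<le> s powr (\<alpha>-1) * norm (Wf D \<alpha> s)"
      using True t a by (intro mult_right_mono powr_mono2) auto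
    also have "s powr (\<alpha>-1) = s powr \<alpha> / s" using s0 by (simp add: powr_diff)
    finally show ?thesis using True s0 by (simp add: Fn_def)
  qed simp
  have i1: "integrable lborel (\<lambda>s. norm (indicator {t..} s *\<^sub>R ((s-t) powr (\<alpha>-1) *\<^sub>R Wf D \<alpha> s)))"
  proof (rule Bochner_Integration.integrable_bound[OF ht(1) _ AE_I2])
    show "(\<lambda>s. norm (indicator {t..} s *\<^sub>R ((s-t) powr (\<alpha>-1) *\<^sub>R Wf D \<alpha> s))) \<in> borel_measurable lborel"
      by measurable
    fix s
    have h0: "indicator {t..} s * (Fn D \<alpha> s / s) \<ge> 0" using Fn_nonneg[of \<alpha> s] t by (auto simp: indicator_def)
    have e: "norm (indicator {t..} s * (Fn D \<alpha> s / s)) = indicator {t..} s * (Fn D \<alpha> s / s)"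
      by (simp only: real_norm_def abs_of_nonneg[OF h0])
    show "norm (norm (indicator {t..} s *\<^sub>R ((s-t) powr (\<alpha>-1) *\<^sub>R Wf D \<alpha> s))) \<le> norm (indicator {t..} s * (Fn D \<alpha> s / s))"
      unfolding e using pw[of s] by simp
  qed
  have "norm (\<psi> t) = (1 / Gamma \<alpha>) * norm (LINT s:{t..}|lborel. (s-t) powr (\<alpha>-1) *\<^sub>R Wf D \<alpha> s)"
    using inversion[OF SWD D0 a t] Ga by (metis norm_scaleR abs_of_pos zero_less_divide_1_iff)
  also have "\<dots> \<le> (1 / Gamma \<alpha>) * (LBINT s. indicator {t..} s * (Fn D \<alpha> s / s))"
  proof (intro mult_left_mono)
    have "norm (LINT s:{t..}|lborel. (s-t) powr (\<alpha>-1) *\<^sub>R Wf D \<alpha> s) \<le> (LBINT s. norm (indicator {t..} s *\<^sub>R ((s-t) powr (\<alpha>-1) *\<^sub>R Wf D \<alpha> s)))"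
      unfolding set_lebesgue_integral_def by (rule integral_norm_bound)
    also have "\<dots> \<le> (LBINT s. indicator {t..} s * (Fn D \<alpha> s / s))"
      by (rule integral_mono[OF i1 ht(1) pw])
    finally show "norm (LINT s:{t..}|lborel. (s-t) powr (\<alpha>-1) *\<^sub>R Wf D \<alpha> s) \<le> (LBINT s. indicator {t..} s * (Fn D \<alpha> s / s))" .
  qed (use Ga in simp)
  also have "\<dots> \<le> (1 / Gamma \<alpha>) * (Cp p * t powr (-1/p) * A powr (1/p))"
    using ht(2) Ga by (intro mult_left_mono) (auto simp: A_def)
  finally have n: "norm (\<psi> t) \<le> (1 / Gamma \<alpha>) * (Cp p * t powr (-1/p) * A powr (1/p))" .
  have "t powr (1/p) * norm (\<psi> t) \<le> t powr (1/p) * ((1 / Gamma \<alpha>) * (Cp p * t powr (-1/p) * A powr (1/p)))"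
    using n by (intro mult_left_mono) auto
  also have "\<dots> = (1 / Gamma \<alpha>) * Cp p * A powr (1/p) * (t powr (1/p) * t powr (-1/p))" by (simp add: mult_ac)
  also have "t powr (1/p) * t powr (-1/p) = 1" using t by (simp add: powr_add[symmetric])
  also have "(1 / Gamma \<alpha>) * Cp p * A powr (1/p) * 1 = (\<alpha> * Cp p) * ((1 / Gamma (\<alpha> + 1)) * A powr (1/p))"
  proof -
    have "\<alpha> \<notin> \<int>\<^sub>\<le>\<^sub>0" using a0' nonpos_Ints_nonpos by force
    hence g1: "Gamma (\<alpha> + 1) = \<alpha> * Gamma \<alpha>" by (rule Gamma_plus1)
    show ?thesis unfolding g1 using Ga a0' by (simp add: field_simps)
  qed
  also have "(1 / Gamma (\<alpha> + 1)) * A powr (1/p) = wnorm \<alpha> p \<psi>"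
    using wnorm_Fn[OF a0 p] by (simp add: A_def)
  finally show ?thesis .
qed

end


lemma SW_diff:
  assumes "SW D1" "SW D2"
  shows "SW (\<lambda>k t. D1 k t - D2 k t)"
  unfolding SW_def
proof (intro conjI allI impI)
  fix k and t :: real assume "t \<ge> 0"
  thus "((\<lambda>t. D1 k t - D2 k t) has_vector_derivative D1 (Suc k) t - D2 (Suc k) t) (at t within {0..})"
    using assms unfolding SW_def by (intro has_vector_derivative_diff) auto
next
  fix k m
  obtain B1 where B1: "\<forall>x\<in>(\<lambda>t. (t ^ m) *\<^sub>R D1 k t) ` {0..}. norm x \<le> B1"
    using assms(1) unfolding SW_def bounded_iff by blast
  obtain B2 where B2: "\<forall>x\<in>(\<lambda>t. (t ^ m) *\<^sub>R D2 k t) ` {0..}. norm x \<le> B2"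
    using assms(2) unfolding SW_def bounded_iff by blast
  show "bounded ((\<lambda>t. t ^ m *\<^sub>R (D1 k t - D2 k t)) ` {0..})"
    unfolding bounded_iff
  proof (intro exI ballI)
    fix x assume "x \<in> (\<lambda>t. t ^ m *\<^sub>R (D1 k t - D2 k t)) ` {0..}"
    then obtain t where t: "t \<in> {0..}" and x: "x = t ^ m *\<^sub>R (D1 k t - D2 k t)" by auto
    have "norm x = norm (t ^ m *\<^sub>R D1 k t - t ^ m *\<^sub>R D2 k t)" by (simp add: x scaleR_diff_right)
    also have "\<dots> \<le> norm (t ^ m *\<^sub>R D1 k t) + norm (t ^ m *\<^sub>R D2 k t)" by (rule norm_triangle_ineq4)
    also have "\<dots> \<le> B1 + B2" using B1 B2 t by (intro add_mono) auto
    finally show "norm x \<le> B1 + B2" .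
  qed
qed

lemma Dz_diff: "Dz (\<lambda>k t. D1 k t - D2 k t) k = (\<lambda>u. Dz D1 k u - Dz D2 k u)"
  by (auto simp: Dz_def fun_eq_iff scaleR_diff_right)

lemma Wf_diff:
  assumes S1: "SW D1" and S2: "SW D2" and a: "\<alpha> \<ge> 0" and s: "s \<ge> 0"
  shows "Wf (\<lambda>k t. D1 k t - D2 k t) \<alpha> s = Wf D1 \<alpha> s - Wf D2 \<alpha> s"
proof -
  have b: "0 < bb \<alpha>" "bb \<alpha> \<le> 1" using bb_pos[OF a] bb_le[OF a] by auto
  obtain M1 where M1: "\<forall>y\<ge>0. norm (Dz D1 (nn \<alpha>) y) \<le> M1 / (1+y)^2" using Dz_dec[OF S1] by blast
  obtain M2 where M2: "\<forall>y\<ge>0. norm (Dz D2 (nn \<alpha>) y) \<le> M2 / (1+y)^2" using Dz_dec[OF S2] by blast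
  note i1 = ker_u_int[OF b Dz_meas[OF S1] M1 s] and i2 = ker_u_int[OF b Dz_meas[OF S2] M2 s]
  have "KU (bb \<alpha>) (Dz (\<lambda>k t. D1 k t - D2 k t) (nn \<alpha>)) s = KU (bb \<alpha>) (Dz D1 (nn \<alpha>)) s - KU (bb \<alpha>) (Dz D2 (nn \<alpha>)) s"
    unfolding Dz_diff KU_def using i1 i2
    by (simp add: scaleR_diff_right flip: Bochner_Integration.integral_diff)
  thus ?thesis by (simp add: Wf_def scaleR_diff_right)
qed

lemma wnorm_diff:
  assumes a: "\<alpha> \<ge> 0" and p: "p \<ge> 1"
    and S1: "SW D1" and E1: "\<And>t. t \<ge> 0 \<Longrightarrow> D1 0 t = \<psi>1 t"
    and S2: "SW D2" and E2: "\<And>t. t \<ge> 0 \<Longrightarrow> D2 0 t = \<psi>2 t"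
  shows "\<bar>wnorm \<alpha> p \<psi>1 - wnorm \<alpha> p \<psi>2\<bar> \<le> wnorm \<alpha> p (\<lambda>t. \<psi>1 t - \<psi>2 t)"
proof -
  define D3 where "D3 = (\<lambda>k t. D1 k t - D2 k t)"
  have S3: "SW D3" unfolding D3_def by (rule SW_diff[OF S1 S2])
  have E3: "D3 0 t = \<psi>1 t - \<psi>2 t" if "t \<ge> 0" for t using E1[OF that] E2[OF that] by (simp add: D3_def)
  have W3: "Wf D3 \<alpha> s = Wf D1 \<alpha> s - Wf D2 \<alpha> s" if "s \<ge> 0" for s
    unfolding D3_def by (rule Wf_diff[OF S1 S2 a that])
  have G: "Gamma (\<alpha> + 1) > 0" using a by (intro Gamma_real_pos) auto
  define N where "N D = (LBINT s. Fn D \<alpha> s powr p) powr (1/p)" for D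
  have w1: "wnorm \<alpha> p \<psi>1 = (1 / Gamma (\<alpha> + 1)) * N D1" unfolding N_def by (rule wnorm_Fn[OF S1 E1 a p])
  have w2: "wnorm \<alpha> p \<psi>2 = (1 / Gamma (\<alpha> + 1)) * N D2" unfolding N_def by (rule wnorm_Fn[OF S2 E2 a p])
  have w3: "wnorm \<alpha> p (\<lambda>t. \<psi>1 t - \<psi>2 t) = (1 / Gamma (\<alpha> + 1)) * N D3" unfolding N_def by (rule wnorm_Fn[OF S3 E3 a p])
  have le12: "Fn D1 \<alpha> s \<le> Fn D2 \<alpha> s + Fn D3 \<alpha> s" for s
  proof (cases "s > 0")
    case True
    have "norm (Wf D1 \<alpha> s) \<le> norm (Wf D2 \<alpha> s) + norm (Wf D3 \<alpha> s)"
      using W3[of s] True norm_triangle_ineq[of "Wf D2 \<alpha> s" "Wf D1 \<alpha> s - Wf D2 \<alpha> s"] by simp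
    hence "s powr \<alpha> * norm (Wf D1 \<alpha> s) \<le> s powr \<alpha> * (norm (Wf D2 \<alpha> s) + norm (Wf D3 \<alpha> s))"
      by (intro mult_left_mono) auto
    thus ?thesis using True by (simp add: Fn_def algebra_simps)
  qed (simp add: Fn_def)
  have le21: "Fn D2 \<alpha> s \<le> Fn D1 \<alpha> s + Fn D3 \<alpha> s" for s
  proof (cases "s > 0")
    case True
    have "norm (Wf D2 \<alpha> s) \<le> norm (Wf D1 \<alpha> s) + norm (Wf D3 \<alpha> s)"
      using W3[of s] True norm_triangle_ineq4[of "Wf D1 \<alpha> s" "Wf D1 \<alpha> s - Wf D2 \<alpha> s"] by simp
    hence "s powr \<alpha> * norm (Wf D2 \<alpha> s) \<le> s powr \<alpha> * (norm (Wf D1 \<alpha> s) + norm (Wf D3 \<alpha> s))"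
      by (intro mult_left_mono) auto
    thus ?thesis using True by (simp add: Fn_def algebra_simps)
  qed (simp add: Fn_def)
  have m1: "N D1 \<le> N D2 + N D3" unfolding N_def
    by (rule minkowski_real(2)[OF p Fn_meas[OF S2 E2] Fn_meas[OF S3 E3] Fn_meas[OF S1 E1] Fn_nonneg[OF S2 E2] Fn_nonneg[OF S3 E3] Fn_nonneg[OF S1 E1] le12
          Fn_int[OF S2 E2 a p] Fn_int[OF S3 E3 a p]])
  have m2: "N D2 \<le> N D1 + N D3" unfolding N_def
    by (rule minkowski_real(2)[OF p Fn_meas[OF S1 E1] Fn_meas[OF S3 E3] Fn_meas[OF S2 E2] Fn_nonneg[OF S1 E1] Fn_nonneg[OF S3 E3] Fn_nonneg[OF S2 E2] le21
          Fn_int[OF S1 E1 a p] Fn_int[OF S3 E3 a p]])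
  have "\<bar>N D1 - N D2\<bar> \<le> N D3" using m1 m2 by linarith
  hence "(1 / Gamma (\<alpha> + 1)) * \<bar>N D1 - N D2\<bar> \<le> (1 / Gamma (\<alpha> + 1)) * N D3"
    using G by (intro mult_left_mono) auto
  moreover have "\<bar>(1 / Gamma (\<alpha> + 1)) * N D1 - (1 / Gamma (\<alpha> + 1)) * N D2\<bar> = (1 / Gamma (\<alpha> + 1)) * \<bar>N D1 - N D2\<bar>"
    using G by (simp add: abs_mult flip: right_diff_distrib diff_divide_distrib)
  ultimately show ?thesis unfolding w1 w2 w3 by simp
qed


lemma Cp_pos: "p \<ge> 1 \<Longrightarrow> Cp p > 0"
proof -
  assume p: "p \<ge> 1"
  show ?thesis
  proof (cases "p = 1")
    case False
    hence "p > 1" using p by simp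
    hence "p/(p-1) - 1 > 0" by (simp add: field_simps)
    thus ?thesis using False by (simp add: Cp_def)
  qed (simp add: Cp_def)
qed

theorem proposition2p4:
  fixes p \<alpha> :: real
  assumes "p \<ge> 1" and "\<alpha> \<ge> 1"
  shows "\<exists>C. \<forall>f \<phi>. T_rep \<alpha> p \<phi> f \<longrightarrow>
           (\<exists>g. continuous_on {0<..} g \<and>
                (AE t in lborel. t > 0 \<longrightarrow> g t = f t) \<and>
                (g \<longlongrightarrow> 0) at_top \<and>
                (\<forall>t>0. t powr (1 / p) * norm (g t) \<le> C * T_norm_seq \<alpha> p \<phi>))"
proof -
  note p = assms(1) and a = assms(2)
  have a0: "\<alpha> \<ge> 0" using a by simp
  define C where "C = \<alpha> * Cp p"
  have C0: "C > 0" using a Cp_pos[OF p] by (simp add: C_def)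
  have p0: "p > 0" using p by simp
  show ?thesis
  proof (rule exI[of _ C], intro allI impI)
    fix f and \<phi> :: "nat \<Rightarrow> real \<Rightarrow> complex"
    assume T: "T_rep \<alpha> p \<phi> f"
    have sch: "\<And>n. schwartz_plus (\<phi> n)"
      and cau: "\<And>\<epsilon>. \<epsilon> > 0 \<Longrightarrow> \<exists>N. \<forall>m\<ge>N. \<forall>n\<ge>N. wnorm \<alpha> p (\<lambda>t. \<phi> m t - \<phi> n t) < \<epsilon>"
      and fm: "set_borel_measurable lborel {0<..} f"
      and lp: "(\<lambda>n. \<integral>\<^sup>+ t\<in>{0<..}. ennreal (norm (\<phi> n t - f t) powr p) \<partial>lborel) \<longlonglongrightarrow> 0"
      using T unfolding T_rep_def by auto
    have "\<forall>n. \<exists>D. SW D \<and> (\<forall>t\<ge>0. D 0 t = \<phi> n t)"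
    proof
      fix n
      obtain D where "SW D" "\<And>t. t \<ge> 0 \<Longrightarrow> D 0 t = \<phi> n t" using schwartz_SW[OF sch[of n]] by blast
      thus "\<exists>D. SW D \<and> (\<forall>t\<ge>0. D 0 t = \<phi> n t)" by blast
    qed
    then obtain DD where DD: "\<And>n. SW (DD n)" "\<And>n t. t \<ge> 0 \<Longrightarrow> DD n 0 t = \<phi> n t"
      by (metis choice)
    have pb: "t powr (1/p) * norm (\<phi> n t) \<le> C * wnorm \<alpha> p (\<phi> n)" if "t > 0" for n t
      unfolding C_def by (rule pointwise_bound[OF DD(1) DD(2) a p that])
    have pbd: "t powr (1/p) * norm (\<phi> m t - \<phi> n t) \<le> C * wnorm \<alpha> p (\<lambda>t. \<phi> m t - \<phi> n t)" if "t > 0" for m n t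
    proof -
      have S: "SW (\<lambda>k t. DD m k t - DD n k t)" by (rule SW_diff[OF DD(1) DD(1)])
      have E: "(\<lambda>k t. DD m k t - DD n k t) 0 t = \<phi> m t - \<phi> n t" if "t \<ge> 0" for t
        using DD(2)[OF that, of m] DD(2)[OF that, of n] by simp
      show ?thesis unfolding C_def
        using pointwise_bound[OF S E a p \<open>t > 0\<close>] by simp
    qed
    have wd: "\<bar>wnorm \<alpha> p (\<phi> m) - wnorm \<alpha> p (\<phi> n)\<bar> \<le> wnorm \<alpha> p (\<lambda>t. \<phi> m t - \<phi> n t)" for m n
      using wnorm_diff[OF a0 p DD(1)[of m] DD(2)[where n=m] DD(1)[of n] DD(2)[where n=n]] by simp
    have "Cauchy (\<lambda>n. wnorm \<alpha> p (\<phi> n))"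
    proof (rule CauchyI)
      fix e :: real assume "e > 0"
      then obtain N where N: "\<forall>m\<ge>N. \<forall>n\<ge>N. wnorm \<alpha> p (\<lambda>t. \<phi> m t - \<phi> n t) < e" using cau by blast
      show "\<exists>M. \<forall>m\<ge>M. \<forall>n\<ge>M. norm (wnorm \<alpha> p (\<phi> m) - wnorm \<alpha> p (\<phi> n)) < e"
        using N wd by (metis order_le_less_trans real_norm_def)
    qed
    then obtain L where L: "(\<lambda>n. wnorm \<alpha> p (\<phi> n)) \<longlonglongrightarrow> L"
      unfolding Cauchy_convergent_iff convergent_def by blast
    have TN: "T_norm_seq \<alpha> p \<phi> = L" unfolding T_norm_seq_def using L by (rule limI)
    have E: "\<exists>N. \<forall>n\<ge>N. \<forall>m\<ge>N. \<forall>t>0. t powr (1/p) * norm (\<phi> m t - \<phi> n t) \<le> C * \<epsilon>" if eps: "\<epsilon> > 0" for \<epsilon>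
    proof -
      obtain N where N: "\<forall>m\<ge>N. \<forall>n\<ge>N. wnorm \<alpha> p (\<lambda>t. \<phi> m t - \<phi> n t) < \<epsilon>" using cau[OF eps] by blast
      show ?thesis
      proof (intro exI allI impI)
        fix n m :: nat and t :: real assume nm: "n \<ge> N" "m \<ge> N" and t: "t > 0"
        have "t powr (1/p) * norm (\<phi> m t - \<phi> n t) \<le> C * wnorm \<alpha> p (\<lambda>t. \<phi> m t - \<phi> n t)" by (rule pbd[OF t])
        also have "\<dots> \<le> C * \<epsilon>" using N nm C0 by (intro mult_left_mono) (auto intro: less_imp_le)
        finally show "t powr (1/p) * norm (\<phi> m t - \<phi> n t) \<le> C * \<epsilon>" .
      qed
    qed
    have tp: "t powr (1/p) > 0" if "t > 0" for t :: real using that by simp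
    have pc: "Cauchy (\<lambda>n. \<phi> n t)" if t: "t > 0" for t
    proof (rule CauchyI)
      fix e :: real assume e: "e > 0"
      define \<epsilon> where "\<epsilon> = e * t powr (1/p) / (2 * C)"
      have \<epsilon>: "\<epsilon> > 0" using e C0 tp[OF t] by (simp add: \<epsilon>_def)
      obtain N where N: "\<forall>n\<ge>N. \<forall>m\<ge>N. \<forall>t>0. t powr (1/p) * norm (\<phi> m t - \<phi> n t) \<le> C * \<epsilon>"
        using E[OF \<epsilon>] by blast
      show "\<exists>M. \<forall>m\<ge>M. \<forall>n\<ge>M. norm (\<phi> m t - \<phi> n t) < e"
      proof (intro exI allI impI)
        fix m n assume "m \<ge> N" "n \<ge> N"
        hence "t powr (1/p) * norm (\<phi> m t - \<phi> n t) \<le> C * \<epsilon>" using N t by auto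
        hence "norm (\<phi> m t - \<phi> n t) \<le> C * \<epsilon> / t powr (1/p)" using tp[OF t] by (simp add: field_simps)
        also have "\<dots> = e / 2" using C0 tp[OF t] by (simp add: \<epsilon>_def field_simps)
        also have "\<dots> < e" using e by simp
        finally show "norm (\<phi> m t - \<phi> n t) < e" .
      qed
    qed
    define g where "g t = lim (\<lambda>n. \<phi> n t)" for t
    have gl: "(\<lambda>n. \<phi> n t) \<longlonglongrightarrow> g t" if "t > 0" for t
      using pc[OF that] unfolding g_def Cauchy_convergent_iff convergent_LIMSEQ_iff .
    have unif: "\<exists>N. \<forall>n\<ge>N. \<forall>t>0. t powr (1/p) * norm (g t - \<phi> n t) \<le> C * \<epsilon>" if eps: "\<epsilon> > 0" for \<epsilon>
    proof -
      obtain N where N: "\<forall>n\<ge>N. \<forall>m\<ge>N. \<forall>t>0. t powr (1/p) * norm (\<phi> m t - \<phi> n t) \<le> C * \<epsilon>"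
        using E[OF eps] by blast
      show ?thesis
      proof (intro exI allI impI)
        fix n t assume n: "n \<ge> N" and t: "(t::real) > 0"
        have "(\<lambda>m. t powr (1/p) * norm (\<phi> m t - \<phi> n t)) \<longlonglongrightarrow> t powr (1/p) * norm (g t - \<phi> n t)"
          by (intro tendsto_intros gl[OF t])
        moreover have "\<exists>M. \<forall>m\<ge>M. t powr (1/p) * norm (\<phi> m t - \<phi> n t) \<le> C * \<epsilon>"
          using N n t by blast
        ultimately show "t powr (1/p) * norm (g t - \<phi> n t) \<le> C * \<epsilon>" by (rule LIMSEQ_le_const2)
      qed
    qed
    have unif': "\<exists>N. \<forall>n\<ge>N. \<forall>t\<ge>a. norm (g t - \<phi> n t) < e" if a: "a > 0" and e: "e > 0" for a e :: real
    proof -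
      define \<epsilon> where "\<epsilon> = e * a powr (1/p) / (2 * C)"
      have \<epsilon>: "\<epsilon> > 0" using e C0 tp[OF a] by (simp add: \<epsilon>_def)
      obtain N where N: "\<forall>n\<ge>N. \<forall>t>0. t powr (1/p) * norm (g t - \<phi> n t) \<le> C * \<epsilon>" using unif[OF \<epsilon>] by blast
      show ?thesis
      proof (intro exI allI impI)
        fix n t assume n: "n \<ge> N" and t: "t \<ge> a"
        have t0: "t > 0" using t a by simp
        have "t powr (1/p) * norm (g t - \<phi> n t) \<le> C * \<epsilon>" using N n t0 by auto
        moreover have "a powr (1/p) \<le> t powr (1/p)" using t a p0 by (intro powr_mono2) auto
        ultimately have "a powr (1/p) * norm (g t - \<phi> n t) \<le> C * \<epsilon>"
          by (meson mult_right_mono norm_ge_zero order_trans)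
        hence "norm (g t - \<phi> n t) \<le> C * \<epsilon> / a powr (1/p)" using tp[OF a] by (simp add: field_simps)
        also have "\<dots> = e / 2" using C0 tp[OF a] by (simp add: \<epsilon>_def field_simps)
        also have "\<dots> < e" using e by simp
        finally show "norm (g t - \<phi> n t) < e" .
      qed
    qed
    have phic: "continuous_on {0<..} (\<phi> n)" for n
    proof -
      have "continuous_on {0<..} (DD n 0)" by (rule continuous_on_subset[OF SW_cont[OF DD(1)]]) auto
      thus ?thesis by (rule continuous_on_cong[THEN iffD1, rotated 2]) (auto simp: DD(2))
    qed
    have gc: "continuous_on {0<..} g"
    proof (rule continuous_at_imp_continuous_on, intro ballI)
      fix s :: real assume "s \<in> {0<..}"
      hence s: "s > 0" by simp
      have "continuous_on {s/2<..} g"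
      proof (rule uniform_limit_theorem[where f=\<phi> and F=sequentially])
        show "\<forall>\<^sub>F n in sequentially. continuous_on {s/2<..} (\<phi> n)"
          using s by (intro always_eventually allI continuous_on_subset[OF phic]) auto
        show "uniform_limit {s/2<..} \<phi> g sequentially"
          unfolding uniform_limit_iff
        proof (intro allI impI)
          fix e :: real assume e: "e > 0"
          obtain N where N: "\<forall>n\<ge>N. \<forall>t\<ge>s/2. norm (g t - \<phi> n t) < e" using unif'[OF _ e, of "s/2"] s by auto
          show "\<forall>\<^sub>F n in sequentially. \<forall>x\<in>{s/2<..}. dist (\<phi> n x) (g x) < e"
            unfolding eventually_sequentially
          proof (intro exI allI impI ballI)
            fix n x assume "n \<ge> N" "x \<in> {s/2<..}"
            hence "norm (g x - \<phi> n x) < e" using N by auto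
            thus "dist (\<phi> n x) (g x) < e" by (simp add: dist_norm norm_minus_commute)
          qed
        qed
      qed simp
      thus "isCont g s" using s by (subst (asm) continuous_on_eq_continuous_at) auto
    qed
    have g0: "(g \<longlongrightarrow> 0) at_top"
    proof (rule tendstoI)
      fix e :: real assume e: "e > 0"
      obtain N where N: "\<forall>n\<ge>N. \<forall>t\<ge>1. norm (g t - \<phi> n t) < e/2" using unif'[of 1 "e/2"] e by auto
      have "(Dz (DD N) 0 \<longlongrightarrow> 0) at_top" by (rule Dz_lim[OF DD(1)])
      moreover have "\<forall>\<^sub>F t in at_top. Dz (DD N) 0 t = \<phi> N t"
        by (intro eventually_at_top_linorderI[of 0]) (simp add: Dz_eq DD(2))
      ultimately have "(\<phi> N \<longlongrightarrow> 0) at_top" using tendsto_cong by fastforce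
      hence "\<forall>\<^sub>F t in at_top. dist (\<phi> N t) 0 < e/2" using e by (intro tendstoD) auto
      moreover have "\<forall>\<^sub>F t in at_top. (t::real) \<ge> 1" by (rule eventually_ge_at_top)
      ultimately show "\<forall>\<^sub>F t in at_top. dist (g t) 0 < e"
      proof eventually_elim
        case (elim t)
        have "norm (g t) \<le> norm (g t - \<phi> N t) + norm (\<phi> N t)" using norm_triangle_ineq[of "g t - \<phi> N t" "\<phi> N t"] by simp
        also have "\<dots> < e/2 + e/2" using N elim by (intro add_strict_mono) auto
        finally show ?case by simp
      qed
    qed
    have gm: "(\<lambda>t. indicator {0<..} t *\<^sub>R g t) \<in> borel_measurable borel"
      by (rule borel_measurable_continuous_on_indicator[OF _ gc]) auto
    have phim: "(\<lambda>t. indicator {0<..} t *\<^sub>R \<phi> n t) \<in> borel_measurable borel" for n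
      by (rule borel_measurable_continuous_on_indicator[OF _ phic]) auto
    have fm': "(\<lambda>t. indicator {0<..} t *\<^sub>R f t) \<in> borel_measurable borel"
      using fm unfolding set_borel_measurable_def by simp
    define h where "h n t = ennreal (norm (indicator {0<..} t *\<^sub>R \<phi> n t - indicator {0<..} t *\<^sub>R f t) powr p)" for n t
    have hm: "h n \<in> borel_measurable lborel" for n
      unfolding h_def using phim[of n] fm' by measurable
    have heq: "(\<integral>\<^sup>+ t\<in>{0<..}. ennreal (norm (\<phi> n t - f t) powr p) \<partial>lborel) = (\<integral>\<^sup>+ t. h n t \<partial>lborel)" for n
      by (intro nn_integral_cong) (auto simp: h_def indicator_def)
    have AE0: "AE t in lborel. t > 0 \<longrightarrow> g t = f t"
    proof -
      define G where "G t = ennreal (norm (indicator {0<..} t *\<^sub>R g t - indicator {0<..} t *\<^sub>R f t) powr p)" for t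
      have Gm: "G \<in> borel_measurable lborel" unfolding G_def using gm fm' by measurable
      have hG: "liminf (\<lambda>n. h n t) = G t" for t
      proof (cases "t > 0")
        case True
        have "(\<lambda>n. h n t) \<longlonglongrightarrow> G t"
          unfolding h_def G_def using True
          by (intro tendsto_ennrealI tendsto_powr2 tendsto_intros gl[OF True]) (auto simp: p0)
        thus ?thesis by (intro lim_imp_Liminf) auto
      next
        case False
        thus ?thesis using p0 by (simp add: h_def G_def Liminf_const)
      qed
      have "(\<integral>\<^sup>+ t. G t \<partial>lborel) \<le> liminf (\<lambda>n. \<integral>\<^sup>+ t. h n t \<partial>lborel)"
        using nn_integral_liminf[of h lborel, OF hm] unfolding hG .
      also have "liminf (\<lambda>n. \<integral>\<^sup>+ t. h n t \<partial>lborel) = 0"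
        using lp unfolding heq by (intro lim_imp_Liminf) auto
      finally have "(\<integral>\<^sup>+ t. G t \<partial>lborel) = 0" by simp
      hence "AE t in lborel. G t = 0" using nn_integral_0_iff_AE[OF Gm] by simp
      thus ?thesis
      proof eventually_elim
        case (elim t)
        show ?case
        proof
          assume t: "t > 0"
          hence "norm (g t - f t) powr p = 0" using elim by (simp add: G_def)
          thus "g t = f t" by simp
        qed
      qed
    qed
    have bnd: "t powr (1 / p) * norm (g t) \<le> C * T_norm_seq \<alpha> p \<phi>" if t: "t > 0" for t
    proof -
      have "(\<lambda>n. t powr (1/p) * norm (\<phi> n t)) \<longlonglongrightarrow> t powr (1/p) * norm (g t)"
        by (intro tendsto_intros gl[OF t])
      moreover have "(\<lambda>n. C * wnorm \<alpha> p (\<phi> n)) \<longlonglongrightarrow> C * L" by (intro tendsto_intros L)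
      moreover have "\<exists>N. \<forall>n\<ge>N. t powr (1/p) * norm (\<phi> n t) \<le> C * wnorm \<alpha> p (\<phi> n)"
        using pb[OF t] by blast
      ultimately have "t powr (1/p) * norm (g t) \<le> C * L" by (rule LIMSEQ_le)
      thus ?thesis by (simp add: TN)
    qed
    show "\<exists>g. continuous_on {0<..} g \<and>
                (AE t in lborel. t > 0 \<longrightarrow> g t = f t) \<and>
                (g \<longlongrightarrow> 0) at_top \<and>
                (\<forall>t>0. t powr (1 / p) * norm (g t) \<le> C * T_norm_seq \<alpha> p \<phi>)"
      using gc AE0 g0 bnd by blast
  qed
qed


end
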